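(* In the finite element setting described in the context (linear hexahedral elements for 3D elasticity, $m=24$), let $\beta\ge0$ and, for each element $e$ with mass $m_e>0$, $$M_e=I_3\otimes\tfrac{m_e}{8}I_8,\qquad E_e=I_3\otimes \mathrm{E}_e,\quad \mathrm{E}_e=\frac{\beta m_e}{32}(A\otimes G),$$ with $$A=\begin{pmatrix}1&-1\\-1&1\end{pmatrix},\qquad G=\begin{pmatrix}4&2&1&2\\2&4&2&1\\1&2&4&2\\2&1&2&4\end{pmatrix},$$ and $\overline{M}_e=M_e+E_e$. Let $M=\sum_eL_e^TM_eL_e$ and $\overline{M}=\sum_eL_e^T\overline{M}_eL_e$. Then for all $i=1,\dots,n$, $$1\le\frac{\omega_i}{\overline{\omega}_i}\le\sqrt{1+\tfrac{9}{2}\beta},\qquad \frac{\kappa(\overline{M})}{\kappa(M)}\le1+\tfrac92\beta,$$ where $\omega_i=\sqrt{\lambda_i(K,M)}$, $\overline{\omega}_i=\sqrt{\lambda_i(K,\overline{M})}$.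
   Context: Finite element setting: there are $n$ global degrees of freedom and $N$ elements, each with $m$ local degrees of freedom. For each element $e$, $L_e\in\mathbb{R}^{m\times n}$ satisfies $L_e^T=[\mathbf{e}_{i_1},\dots,\mathbf{e}_{i_m}]$ for distinct indices (columns of $I_n$), and every global index appears for at least one element. Element matrices are assembled as $A=\sum_{e=1}^N L_e^TA_eL_e$. The global stiffness matrix is $K=\sum_e L_e^TK_eL_e$ with each $K_e$ symmetric positive semidefinite, and $K$ is assumed symmetric positive definite. Generalized eigenvalues of a pair are numbered in ascending order. $\kappa(A)=\lambda_{\max}(A)/\lambda_{\min}(A)$ for symmetric positive definite $A$; $\otimes$ is the Kronecker product. *)

theory Defs
  imports "Jordan_Normal_Form.Determinant"
begin

definition psd_mat :: "real mat \<Rightarrow> bool" where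
  "psd_mat A \<longleftrightarrow> A \<in> carrier_mat (dim_row A) (dim_row A) \<and> transpose_mat A = A \<and>
     (\<forall>x \<in> carrier_vec (dim_row A). x \<bullet> (A *\<^sub>v x) \<ge> 0)"

definition spd_mat :: "real mat \<Rightarrow> bool" where
  "spd_mat A \<longleftrightarrow> A \<in> carrier_mat (dim_row A) (dim_row A) \<and> transpose_mat A = A \<and>
     (\<forall>x \<in> carrier_vec (dim_row A). x \<noteq> 0\<^sub>v (dim_row A) \<longrightarrow> x \<bullet> (A *\<^sub>v x) > 0)"

definition kron :: "real mat \<Rightarrow> real mat \<Rightarrow> real mat" where
  "kron A B = mat (dim_row A * dim_row B) (dim_col A * dim_col B)
     (\<lambda>(i,j). A $$ (i div dim_row B, j div dim_col B) * B $$ (i mod dim_row B, j mod dim_col B))"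

(* Boolean restriction/gather matrix L_e (m x n): row k is e_{idx k}^T *)
definition gather_mat :: "nat \<Rightarrow> nat \<Rightarrow> (nat \<Rightarrow> nat) \<Rightarrow> real mat" where
  "gather_mat m n idx = mat m n (\<lambda>(k,j). if j = idx k then 1 else 0)"

definition assemble :: "nat \<Rightarrow> nat \<Rightarrow> nat \<Rightarrow> (nat \<Rightarrow> nat \<Rightarrow> nat) \<Rightarrow> (nat \<Rightarrow> real mat) \<Rightarrow> real mat" where
  "assemble m n N idx Ae = mat n n (\<lambda>(i,j). \<Sum>e<N.
      (transpose_mat (gather_mat m n (idx e)) * Ae e * gather_mat m n (idx e)) $$ (i,j))"

definition gen_eigs :: "real mat \<Rightarrow> real mat \<Rightarrow> real list" where
  "gen_eigs K M = (THE ls. length ls = dim_row K \<and> sorted ls \<and>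
      (\<forall>x::real. det (x \<cdot>\<^sub>m M - K) = det M * prod_list (map (\<lambda>l. x - l) ls)))"

definition eigs :: "real mat \<Rightarrow> real list" where
  "eigs A = gen_eigs A (1\<^sub>m (dim_row A))"

definition cond_num :: "real mat \<Rightarrow> real" where
  "cond_num A = last (eigs A) / hd (eigs A)"

definition A2 :: "real mat" where
  "A2 = mat_of_rows_list 2 [[1,-1],[-1,1]]"

definition G4 :: "real mat" where
  "G4 = mat_of_rows_list 4 [[4,2,1,2],[2,4,2,1],[1,2,4,2],[2,1,2,4]]"

definition lumped_mass :: "real \<Rightarrow> real mat" where
  "lumped_mass me = kron (1\<^sub>m 3) ((me / 8) \<cdot>\<^sub>m 1\<^sub>m 8)"

definition mass_correction :: "real \<Rightarrow> real \<Rightarrow> real mat" where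
  "mass_correction \<beta> me = kron (1\<^sub>m 3) ((\<beta> * me / 32) \<cdot>\<^sub>m kron A2 G4)"

end

theory Submission
  imports Defs "Jordan_Normal_Form.Spectral_Radius"
begin

lemma sym_form:
  fixes S :: "real mat"
  assumes S: "S \<in> carrier_mat n n" and sym: "transpose_mat S = S"
    and x: "x \<in> carrier_vec n" and y: "y \<in> carrier_vec n"
  shows "x \<bullet> (S *\<^sub>v y) = y \<bullet> (S *\<^sub>v x)"
proof -
  have "x \<bullet> (S *\<^sub>v y) = (transpose_mat S *\<^sub>v x) \<bullet> y"
    using transpose_vec_mult_scalar[OF S y x] by simp
  also have "\<dots> = y \<bullet> (S *\<^sub>v x)" using sym S x y
    by (metis comm_scalar_prod mult_mat_vec_carrier)
  finally show ?thesis .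
qed

lemma mat_inv_exists:
  fixes M :: "real mat"
  assumes M: "M \<in> carrier_mat n n" and d: "det M \<noteq> 0"
  shows "\<exists>Mi \<in> carrier_mat n n. M * Mi = 1\<^sub>m n \<and> Mi * M = 1\<^sub>m n"
  using det_non_zero_imp_unit[OF M d, of undefined]
  unfolding Units_def by (auto simp: ring_mat_simps)

lemma pd_det:
  fixes M :: "real mat"
  assumes M: "M \<in> carrier_mat n n"
    and pd: "\<forall>x\<in>carrier_vec n. x \<noteq> 0\<^sub>v n \<longrightarrow> x \<bullet> (M *\<^sub>v x) > 0"
  shows "det M \<noteq> 0"
proof
  assume "det M = 0"
  then obtain v where v: "v \<in> carrier_vec n" "v \<noteq> 0\<^sub>v n" "M *\<^sub>v v = 0\<^sub>v n"
    using det_0_iff_vec_prod_zero[OF M] by auto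
  have "v \<bullet> (M *\<^sub>v v) = 0" using v by simp
  with pd v show False by auto
qed

lemma eigenpair_exists:
  fixes K M :: "real mat"
  assumes K: "K \<in> carrier_mat n n" and M: "M \<in> carrier_mat n n"
    and symK: "transpose_mat K = K" and symM: "transpose_mat M = M"
    and pd: "\<forall>x\<in>carrier_vec n. x \<noteq> 0\<^sub>v n \<longrightarrow> x \<bullet> (M *\<^sub>v x) > 0"
    and n: "n > 0"
  shows "\<exists>l v. v \<in> carrier_vec n \<and> v \<noteq> 0\<^sub>v n \<and> K *\<^sub>v v = l \<cdot>\<^sub>v (M *\<^sub>v v)"
proof -
  have psd: "\<And>x. x \<in> carrier_vec n \<Longrightarrow> x \<bullet> (M *\<^sub>v x) \<ge> 0"
  proof -
    fix x :: "real vec" assume x: "x \<in> carrier_vec n"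
    show "x \<bullet> (M *\<^sub>v x) \<ge> 0"
    proof (cases "x = 0\<^sub>v n")
      case True then show ?thesis using M by simp
    next
      case False then show ?thesis using pd x by force
    qed
  qed
  obtain Mi where Mi: "Mi \<in> carrier_mat n n" "M * Mi = 1\<^sub>m n" "Mi * M = 1\<^sub>m n"
    using mat_inv_exists[OF M pd_det[OF M pd]] by blast
  define C where "C = Mi * K"
  have C: "C \<in> carrier_mat n n" using Mi K by (simp add: C_def)
  have MC: "M * C = K" unfolding C_def using Mi K M
    by (metis assoc_mult_mat left_mult_one_mat)
  define Cc where "Cc = map_mat complex_of_real C"
  have Cc: "Cc \<in> carrier_mat n n" using C by (simp add: Cc_def)
  obtain z where "z \<in> spectrum Cc" using spectrum_non_empty[OF Cc n] by blast
  then obtain w where w: "w \<in> carrier_vec n" "w \<noteq> 0\<^sub>v n" "Cc *\<^sub>v w = z \<cdot>\<^sub>v w"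
    unfolding spectrum_def eigenvalue_def eigenvector_def using Cc by auto
  define a where "a = vec n (\<lambda>i. Re (w $ i))"
  define b where "b = vec n (\<lambda>i. Im (w $ i))"
  have a: "a \<in> carrier_vec n" and b: "b \<in> carrier_vec n" by (auto simp: a_def b_def)
  have comp: "\<And>i. i < n \<Longrightarrow> (Cc *\<^sub>v w) $ i = (\<Sum>j<n. complex_of_real (C $$ (i,j)) * w $ j)"
    using Cc w(1) C unfolding Cc_def
    by (auto simp: scalar_prod_def atLeast0LessThan intro!: sum.cong)
  have Ca: "C *\<^sub>v a = Re z \<cdot>\<^sub>v a - Im z \<cdot>\<^sub>v b"
  proof (rule eq_vecI)
    fix i assume i: "i < dim_vec (Re z \<cdot>\<^sub>v a - Im z \<cdot>\<^sub>v b)"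
    hence i: "i < n" using a b by simp
    have "Re ((Cc *\<^sub>v w) $ i) = Re (z * w $ i)" using w i by simp
    hence "(\<Sum>j<n. C $$ (i,j) * Re (w $ j)) = Re z * Re (w $ i) - Im z * Im (w $ i)"
      using comp[OF i] by (simp add: Re_sum)
    thus "(C *\<^sub>v a) $ i = (Re z \<cdot>\<^sub>v a - Im z \<cdot>\<^sub>v b) $ i"
      using i C by (simp add: a_def b_def scalar_prod_def atLeast0LessThan)
  qed (use C a b in auto)
  have Cb: "C *\<^sub>v b = Im z \<cdot>\<^sub>v a + Re z \<cdot>\<^sub>v b"
  proof (rule eq_vecI)
    fix i assume i: "i < dim_vec (Im z \<cdot>\<^sub>v a + Re z \<cdot>\<^sub>v b)"
    hence i: "i < n" using a b by simp
    have "Im ((Cc *\<^sub>v w) $ i) = Im (z * w $ i)" using w i by simp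
    hence "(\<Sum>j<n. C $$ (i,j) * Im (w $ j)) = Im z * Re (w $ i) + Re z * Im (w $ i)"
      using comp[OF i] by (simp add: Im_sum)
    thus "(C *\<^sub>v b) $ i = (Im z \<cdot>\<^sub>v a + Re z \<cdot>\<^sub>v b) $ i"
      using i C by (simp add: a_def b_def scalar_prod_def atLeast0LessThan)
  qed (use C a b in auto)
  define al where "al = Re z"
  define be where "be = Im z"
  have Ka: "K *\<^sub>v a = al \<cdot>\<^sub>v (M *\<^sub>v a) - be \<cdot>\<^sub>v (M *\<^sub>v b)"
  proof -
    have "K *\<^sub>v a = M *\<^sub>v (C *\<^sub>v a)" using MC M C a by (metis assoc_mult_mat_vec)
    also have "\<dots> = al \<cdot>\<^sub>v (M *\<^sub>v a) - be \<cdot>\<^sub>v (M *\<^sub>v b)"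
      unfolding Ca al_def be_def using M a b
      by (simp add: mult_minus_distrib_mat_vec mult_mat_vec)
    finally show ?thesis .
  qed
  have Kb: "K *\<^sub>v b = be \<cdot>\<^sub>v (M *\<^sub>v a) + al \<cdot>\<^sub>v (M *\<^sub>v b)"
  proof -
    have "K *\<^sub>v b = M *\<^sub>v (C *\<^sub>v b)" using MC M C b by (metis assoc_mult_mat_vec)
    also have "\<dots> = be \<cdot>\<^sub>v (M *\<^sub>v a) + al \<cdot>\<^sub>v (M *\<^sub>v b)"
      unfolding Cb al_def be_def using M a b
      by (simp add: mult_add_distrib_mat_vec mult_mat_vec)
    finally show ?thesis .
  qed
  have e1: "b \<bullet> (K *\<^sub>v a) = al * (b \<bullet> (M *\<^sub>v a)) - be * (b \<bullet> (M *\<^sub>v b))"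
    unfolding Ka using M a b
    by (simp add: scalar_prod_minus_distrib[of _ n] scalar_prod_smult_distrib[of _ n])
  have e2: "a \<bullet> (K *\<^sub>v b) = be * (a \<bullet> (M *\<^sub>v a)) + al * (a \<bullet> (M *\<^sub>v b))"
    unfolding Kb using M a b
    by (simp add: scalar_prod_add_distrib[of _ n] scalar_prod_smult_distrib[of _ n])
  have s1: "b \<bullet> (K *\<^sub>v a) = a \<bullet> (K *\<^sub>v b)" using sym_form[OF K symK a b] by simp
  have s2: "b \<bullet> (M *\<^sub>v a) = a \<bullet> (M *\<^sub>v b)" using sym_form[OF M symM a b] by simp
  have be0: "be * (a \<bullet> (M *\<^sub>v a) + b \<bullet> (M *\<^sub>v b)) = 0"
    using e1 e2 s1 s2 by (simp add: algebra_simps)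
  have ab: "a \<noteq> 0\<^sub>v n \<or> b \<noteq> 0\<^sub>v n"
  proof (rule ccontr)
    assume "\<not> ?thesis"
    hence "a = 0\<^sub>v n" "b = 0\<^sub>v n" by auto
    hence "\<And>i. i < n \<Longrightarrow> w $ i = 0"
      unfolding a_def b_def by (metis complex_eqI index_vec index_zero_vec(1) zero_complex.simps)
    hence "w = 0\<^sub>v n" using w by (intro eq_vecI) auto
    with w show False by simp
  qed
  have "a \<bullet> (M *\<^sub>v a) + b \<bullet> (M *\<^sub>v b) > 0"
    using ab psd[OF a] psd[OF b] pd a b by (metis add_pos_nonneg add_nonneg_pos)
  hence be: "be = 0" using be0 by simp
  show ?thesis
  proof (cases "a = 0\<^sub>v n")
    case False
    thus ?thesis using a Ka be M by (intro exI[of _ al] exI[of _ a]) auto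
  next
    case True
    hence "b \<noteq> 0\<^sub>v n" using ab by simp
    thus ?thesis using b Kb be M by (intro exI[of _ al] exI[of _ b]) auto
  qed
qed

definition eigsys :: "nat \<Rightarrow> real mat \<Rightarrow> real mat \<Rightarrow> (real \<times> real vec) list \<Rightarrow> bool" where
  "eigsys n K M ps \<longleftrightarrow> length ps = n \<and>
     (\<forall>j<n. snd (ps!j) \<in> carrier_vec n \<and> K *\<^sub>v snd (ps!j) = fst (ps!j) \<cdot>\<^sub>v (M *\<^sub>v snd (ps!j))) \<and>
     (\<forall>j<n. \<forall>k<n. snd (ps!j) \<bullet> (M *\<^sub>v snd (ps!k)) = (if j = k then 1 else 0))"

definition skp :: "nat \<Rightarrow> nat \<Rightarrow> nat" where
  "skp p k = (if k < p then k else Suc k)"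

definition defl :: "nat \<Rightarrow> nat \<Rightarrow> real vec \<Rightarrow> real mat" where
  "defl n p u = mat (Suc n) n (\<lambda>(r,k). (if r = skp p k then 1 else 0) - (if r = p then u $ (skp p k) / u $ p else 0))"

lemma skp_neq: "skp p k \<noteq> p" by (simp add: skp_def)
lemma skp_inj: "skp p k = skp p j \<longleftrightarrow> k = j" by (auto simp: skp_def)
lemma skp_lt: "k < n \<Longrightarrow> p < Suc n \<Longrightarrow> skp p k < Suc n" by (auto simp: skp_def)
lemma skp_surj: "q < Suc n \<Longrightarrow> q \<noteq> p \<Longrightarrow> p < Suc n \<Longrightarrow> \<exists>k<n. q = skp p k"
  by (rule exI[of _ "if q < p then q else q - 1"]) (auto simp: skp_def)

lemma defl_carrier: "defl n p u \<in> carrier_mat (Suc n) n" by (simp add: defl_def)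

lemma defl_transp:
  assumes r: "r \<in> carrier_vec (Suc n)" and p: "p < Suc n" and k: "k < n"
  shows "(transpose_mat (defl n p u) *\<^sub>v r) $ k = r $ (skp p k) - u $ (skp p k) * r $ p / u $ p"
proof -
  have "(transpose_mat (defl n p u) *\<^sub>v r) $ k =
     (\<Sum>q<Suc n. ((if q = skp p k then 1 else 0) - (if q = p then u $ (skp p k) / u $ p else 0)) * r $ q)"
    using r k by (simp add: defl_def scalar_prod_def atLeast0LessThan col_def)
  also have "\<dots> = (\<Sum>q<Suc n. (if q = skp p k then r $ q else 0) - (if q = p then u $ (skp p k) / u $ p * r $ q else 0))"
    by (rule sum.cong) auto
  also have "\<dots> = (\<Sum>q<Suc n. (if q = skp p k then r $ q else 0)) - (\<Sum>q<Suc n. (if q = p then u $ (skp p k) / u $ p * r $ q else 0))"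
    by (rule sum_subtractf)
  also have "\<dots> = r $ (skp p k) - u $ (skp p k) * r $ p / u $ p"
    using skp_lt[OF k p] p by (simp only: sum.delta finite_lessThan lessThan_iff if_True) simp
  finally show ?thesis .
qed

lemma defl_mult_comp:
  assumes z: "z \<in> carrier_vec n" and p: "p < Suc n" and j: "j < n"
  shows "(defl n p u *\<^sub>v z) $ (skp p j) = z $ j"
proof -
  have "(defl n p u *\<^sub>v z) $ (skp p j) = (\<Sum>k<n. (if skp p j = skp p k then 1 else 0) * z $ k)"
    using z skp_lt[OF j p] by (simp add: defl_def scalar_prod_def atLeast0LessThan row_def skp_neq)
  also have "\<dots> = (\<Sum>k<n. if k = j then z $ k else 0)"
    by (rule sum.cong) (auto simp: skp_inj)
  also have "\<dots> = z $ j" using j by (simp add: sum.delta')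
  finally show ?thesis .
qed

lemma defl_u:
  assumes u: "u \<in> carrier_vec (Suc n)" and p: "p < Suc n" and up: "u $ p \<noteq> 0"
  shows "transpose_mat (defl n p u) *\<^sub>v u = 0\<^sub>v n"
  by (rule eq_vecI) (use defl_transp[OF u p] up in \<open>auto simp: defl_def\<close>)

lemma defl_orth:
  assumes u: "u \<in> carrier_vec (Suc n)" and p: "p < Suc n" and up: "u $ p \<noteq> 0"
    and z: "z \<in> carrier_vec n"
  shows "u \<bullet> (defl n p u *\<^sub>v z) = 0"
proof -
  have "u \<bullet> (defl n p u *\<^sub>v z) = (transpose_mat (defl n p u) *\<^sub>v u) \<bullet> z"
    using transpose_vec_mult_scalar[OF defl_carrier z u] by simp
  thus ?thesis using defl_u[OF u p up] z by simp
qed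

lemma defl_kernel:
  assumes u: "u \<in> carrier_vec (Suc n)" and p: "p < Suc n" and up: "u $ p \<noteq> 0"
    and r: "r \<in> carrier_vec (Suc n)" and rz: "transpose_mat (defl n p u) *\<^sub>v r = 0\<^sub>v n"
  shows "r = (r $ p / u $ p) \<cdot>\<^sub>v u"
proof (rule eq_vecI)
  fix q assume "q < dim_vec ((r $ p / u $ p) \<cdot>\<^sub>v u)"
  hence q: "q < Suc n" using u by simp
  show "r $ q = ((r $ p / u $ p) \<cdot>\<^sub>v u) $ q"
  proof (cases "q = p")
    case True thus ?thesis using up q u by simp
  next
    case False
    then obtain k where k: "k < n" "q = skp p k" using skp_surj[OF q _ p] by blast
    have "(transpose_mat (defl n p u) *\<^sub>v r) $ k = 0" using rz k by simp
    hence "r $ q = u $ q * r $ p / u $ p" using defl_transp[OF r p k(1)] k by simp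
    thus ?thesis using q u by simp
  qed
qed (use u r in auto)

lemma defl_inj:
  assumes p: "p < Suc n" and z: "z \<in> carrier_vec n" and bz: "defl n p u *\<^sub>v z = 0\<^sub>v (Suc n)"
  shows "z = 0\<^sub>v n"
proof (rule eq_vecI)
  fix j assume "j < dim_vec (0\<^sub>v n :: real vec)"
  hence j: "j < n" by simp
  have "(defl n p u *\<^sub>v z) $ (skp p j) = 0" using bz skp_lt[OF j p] by simp
  thus "z $ j = 0\<^sub>v n $ j" using defl_mult_comp[OF z p j] j by simp
qed (use z in auto)

lemma pull_form:
  fixes B S :: "real mat"
  assumes B: "B \<in> carrier_mat m n" and S: "S \<in> carrier_mat m m"
    and z: "z \<in> carrier_vec n" and z': "z' \<in> carrier_vec n"
  shows "z \<bullet> ((transpose_mat B * S * B) *\<^sub>v z') = (B *\<^sub>v z) \<bullet> (S *\<^sub>v (B *\<^sub>v z'))"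
proof -
  have BT: "transpose_mat B \<in> carrier_mat n m" using B by simp
  have BTS: "transpose_mat B * S \<in> carrier_mat n m" using BT S by simp
  have Bz': "B *\<^sub>v z' \<in> carrier_vec m" using B z' by simp
  have Bz: "B *\<^sub>v z \<in> carrier_vec m" using B z by simp
  have SBz': "S *\<^sub>v (B *\<^sub>v z') \<in> carrier_vec m" using S Bz' by simp
  have "(transpose_mat B * S * B) *\<^sub>v z' = (transpose_mat B * S) *\<^sub>v (B *\<^sub>v z')"
    by (rule assoc_mult_mat_vec[OF BTS B z'])
  also have "\<dots> = transpose_mat B *\<^sub>v (S *\<^sub>v (B *\<^sub>v z'))"
    by (rule assoc_mult_mat_vec[OF BT S Bz'])
  finally have e: "(transpose_mat B * S * B) *\<^sub>v z' = transpose_mat B *\<^sub>v (S *\<^sub>v (B *\<^sub>v z'))" .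
  have c: "transpose_mat B *\<^sub>v (S *\<^sub>v (B *\<^sub>v z')) \<in> carrier_vec n" using BT SBz' by simp
  have "z \<bullet> ((transpose_mat B * S * B) *\<^sub>v z') = (transpose_mat B *\<^sub>v (S *\<^sub>v (B *\<^sub>v z'))) \<bullet> z"
    unfolding e by (rule comm_scalar_prod[OF z c])
  also have "\<dots> = (S *\<^sub>v (B *\<^sub>v z')) \<bullet> (B *\<^sub>v z)"
    by (rule transpose_vec_mult_scalar[OF B z SBz'])
  also have "\<dots> = (B *\<^sub>v z) \<bullet> (S *\<^sub>v (B *\<^sub>v z'))"
    by (rule comm_scalar_prod[OF SBz' Bz])
  finally show ?thesis .
qed

lemma vec_eq_of_diff:
  fixes a b :: "real vec"
  assumes "a \<in> carrier_vec n" "b \<in> carrier_vec n" "a - b = 0\<^sub>v n"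
  shows "a = b"
proof (rule eq_vecI)
  fix i assume "i < dim_vec b"
  hence "i < n" using assms by simp
  hence "(a - b) $ i = 0" using assms(3) by simp
  moreover have "(a - b) $ i = a $ i - b $ i" using assms(1,2) \<open>i < n\<close> by simp
  ultimately show "a $ i = b $ i" by simp
qed (use assms in simp)

lemma spectral:
  "\<And>K M. K \<in> carrier_mat n n \<Longrightarrow> M \<in> carrier_mat n n \<Longrightarrow>
    transpose_mat K = K \<Longrightarrow> transpose_mat M = M \<Longrightarrow>
    (\<forall>x\<in>carrier_vec n. x \<noteq> 0\<^sub>v n \<longrightarrow> x \<bullet> (M *\<^sub>v x) > 0) \<Longrightarrow>
    \<exists>ps. eigsys n K M ps"
proof (induction n)
  case 0
  show ?case by (rule exI[of _ "[]"]) (simp add: eigsys_def)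
next
  case (Suc n K M)
  note K = Suc.prems(1) and M = Suc.prems(2) and symK = Suc.prems(3) and symM = Suc.prems(4)
    and pd = Suc.prems(5)
  obtain l v0 where v0: "v0 \<in> carrier_vec (Suc n)" "v0 \<noteq> 0\<^sub>v (Suc n)"
    "K *\<^sub>v v0 = l \<cdot>\<^sub>v (M *\<^sub>v v0)"
    using eigenpair_exists[OF K M symK symM pd] by blast
  define s where "s = v0 \<bullet> (M *\<^sub>v v0)"
  have s: "s > 0" using pd v0 by (simp add: s_def)
  define v where "v = (1 / sqrt s) \<cdot>\<^sub>v v0"
  have v: "v \<in> carrier_vec (Suc n)" using v0 by (simp add: v_def)
  have Mv0: "M *\<^sub>v v0 \<in> carrier_vec (Suc n)" using M v0 by simp
  have Mv: "M *\<^sub>v v = (1 / sqrt s) \<cdot>\<^sub>v (M *\<^sub>v v0)" unfolding v_def by (rule mult_mat_vec[OF M v0(1)])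
  have Kv: "K *\<^sub>v v = l \<cdot>\<^sub>v (M *\<^sub>v v)"
  proof -
    have "K *\<^sub>v v = (1 / sqrt s) \<cdot>\<^sub>v (K *\<^sub>v v0)" unfolding v_def by (rule mult_mat_vec[OF K v0(1)])
    also have "\<dots> = (1 / sqrt s) \<cdot>\<^sub>v (l \<cdot>\<^sub>v (M *\<^sub>v v0))" using v0 by simp
    also have "\<dots> = l \<cdot>\<^sub>v (M *\<^sub>v v)" unfolding Mv by (simp add: smult_smult_assoc mult.commute)
    finally show ?thesis .
  qed
  have vMv: "v \<bullet> (M *\<^sub>v v) = 1"
  proof -
    have "v \<bullet> (M *\<^sub>v v) = (1 / sqrt s) * ((1 / sqrt s) * s)"
      unfolding Mv using v0 Mv0 unfolding v_def s_def
      by (simp add: scalar_prod_smult_distrib[of _ "Suc n"] smult_scalar_prod_distrib[of _ "Suc n"])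
    also have "\<dots> = 1" using s by (simp add: field_simps)
    finally show ?thesis .
  qed
  define u where "u = M *\<^sub>v v"
  have u: "u \<in> carrier_vec (Suc n)" using M v by (simp add: u_def)
  have "u \<noteq> 0\<^sub>v (Suc n)" using vMv v unfolding u_def by auto
  then obtain p where p: "p < Suc n" "u $ p \<noteq> 0"
    using u by (metis carrier_vecD eq_vecI index_zero_vec(1) index_zero_vec(2))
  define B where "B = defl n p u"
  have B: "B \<in> carrier_mat (Suc n) n" unfolding B_def by (rule defl_carrier)
  define K1 where "K1 = transpose_mat B * K * B"
  define M1 where "M1 = transpose_mat B * M * B"
  have K1: "K1 \<in> carrier_mat n n" using B K by (simp add: K1_def)
  have M1: "M1 \<in> carrier_mat n n" using B M by (simp add: M1_def)
  have symK1: "transpose_mat K1 = K1"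
  proof -
    have BT: "transpose_mat B \<in> carrier_mat n (Suc n)" using B by simp
    have BTK: "transpose_mat B * K \<in> carrier_mat n (Suc n)" using BT K by simp
    have "transpose_mat (transpose_mat B * K * B) = transpose_mat B * transpose_mat (transpose_mat B * K)"
      by (rule transpose_mult[OF BTK B])
    also have "transpose_mat (transpose_mat B * K) = transpose_mat K * B"
      using transpose_mult[OF BT K] by simp
    also have "transpose_mat B * (transpose_mat K * B) = transpose_mat B * K * B"
      using symK assoc_mult_mat[OF BT K B] by simp
    finally show ?thesis unfolding K1_def .
  qed
  have symM1: "transpose_mat M1 = M1"
  proof -
    have BT: "transpose_mat B \<in> carrier_mat n (Suc n)" using B by simp
    have BTK: "transpose_mat B * M \<in> carrier_mat n (Suc n)" using BT M by simp
    have "transpose_mat (transpose_mat B * M * B) = transpose_mat B * transpose_mat (transpose_mat B * M)"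
      by (rule transpose_mult[OF BTK B])
    also have "transpose_mat (transpose_mat B * M) = transpose_mat M * B"
      using transpose_mult[OF BT M] by simp
    also have "transpose_mat B * (transpose_mat M * B) = transpose_mat B * M * B"
      using symM assoc_mult_mat[OF BT M B] by simp
    finally show ?thesis unfolding M1_def .
  qed
  have pd1: "\<forall>x\<in>carrier_vec n. x \<noteq> 0\<^sub>v n \<longrightarrow> x \<bullet> (M1 *\<^sub>v x) > 0"
  proof (intro ballI impI)
    fix x :: "real vec" assume x: "x \<in> carrier_vec n" "x \<noteq> 0\<^sub>v n"
    have Bx: "B *\<^sub>v x \<in> carrier_vec (Suc n)" using B x by simp
    have "B *\<^sub>v x \<noteq> 0\<^sub>v (Suc n)" using defl_inj[OF p(1) x(1)] x unfolding B_def by blast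
    hence "(B *\<^sub>v x) \<bullet> (M *\<^sub>v (B *\<^sub>v x)) > 0" using pd Bx by blast
    thus "x \<bullet> (M1 *\<^sub>v x) > 0" unfolding M1_def using pull_form[OF B M x(1) x(1)] by simp
  qed
  obtain ps1 where ps1: "eigsys n K1 M1 ps1" using Suc.IH[OF K1 M1 symK1 symM1 pd1] by blast
  define ps where "ps = (l, v) # map (\<lambda>(m, z). (m, B *\<^sub>v z)) ps1"
  have len: "length ps1 = n" using ps1 by (simp add: eigsys_def)
  have ps0: "ps ! 0 = (l, v)" by (simp add: ps_def)
  have psS: "\<And>j. j < n \<Longrightarrow> ps ! Suc j = (fst (ps1 ! j), B *\<^sub>v snd (ps1 ! j))"
    using len by (simp add: ps_def case_prod_beta)
  have z1: "\<And>j. j < n \<Longrightarrow> snd (ps1 ! j) \<in> carrier_vec n" using ps1 by (simp add: eigsys_def)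
  have ev1: "\<And>j. j < n \<Longrightarrow> K1 *\<^sub>v snd (ps1!j) = fst (ps1!j) \<cdot>\<^sub>v (M1 *\<^sub>v snd (ps1!j))"
    using ps1 by (simp add: eigsys_def)
  have on1: "\<And>j k. j < n \<Longrightarrow> k < n \<Longrightarrow> snd (ps1!j) \<bullet> (M1 *\<^sub>v snd (ps1!k)) = (if j = k then 1 else 0)"
    using ps1 by (simp add: eigsys_def)
  have orthB: "\<And>z. z \<in> carrier_vec n \<Longrightarrow> u \<bullet> (B *\<^sub>v z) = 0"
    unfolding B_def by (rule defl_orth[OF u p])
  have vMB: "\<And>z. z \<in> carrier_vec n \<Longrightarrow> v \<bullet> (M *\<^sub>v (B *\<^sub>v z)) = 0"
  proof -
    fix z :: "real vec" assume z: "z \<in> carrier_vec n"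
    have Bz: "B *\<^sub>v z \<in> carrier_vec (Suc n)" using B z by simp
    have "v \<bullet> (M *\<^sub>v (B *\<^sub>v z)) = (B *\<^sub>v z) \<bullet> (M *\<^sub>v v)" by (rule sym_form[OF M symM v Bz])
    also have "\<dots> = u \<bullet> (B *\<^sub>v z)" unfolding u_def by (rule comm_scalar_prod[OF Bz], use M v in simp)
    finally show "v \<bullet> (M *\<^sub>v (B *\<^sub>v z)) = 0" using orthB[OF z] by simp
  qed
  have BMv: "\<And>z. z \<in> carrier_vec n \<Longrightarrow> (B *\<^sub>v z) \<bullet> (M *\<^sub>v v) = 0"
    using vMB sym_form[OF M symM v] B by (metis mult_mat_vec_carrier)
  have vKB: "\<And>z. z \<in> carrier_vec n \<Longrightarrow> v \<bullet> (K *\<^sub>v (B *\<^sub>v z)) = 0"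
  proof -
    fix z :: "real vec" assume z: "z \<in> carrier_vec n"
    have Bz: "B *\<^sub>v z \<in> carrier_vec (Suc n)" using B z by simp
    have "v \<bullet> (K *\<^sub>v (B *\<^sub>v z)) = (B *\<^sub>v z) \<bullet> (K *\<^sub>v v)" by (rule sym_form[OF K symK v Bz])
    also have "\<dots> = l * ((B *\<^sub>v z) \<bullet> (M *\<^sub>v v))" unfolding Kv
      by (rule scalar_prod_smult_distrib[OF Bz], use M v in simp)
    finally show "v \<bullet> (K *\<^sub>v (B *\<^sub>v z)) = 0" using BMv[OF z] by simp
  qed
  have evB: "\<And>z m. z \<in> carrier_vec n \<Longrightarrow> K1 *\<^sub>v z = m \<cdot>\<^sub>v (M1 *\<^sub>v z) \<Longrightarrow>
      K *\<^sub>v (B *\<^sub>v z) = m \<cdot>\<^sub>v (M *\<^sub>v (B *\<^sub>v z))"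
  proof -
    fix z :: "real vec" and m :: real
    assume z: "z \<in> carrier_vec n" and e: "K1 *\<^sub>v z = m \<cdot>\<^sub>v (M1 *\<^sub>v z)"
    have Bz: "B *\<^sub>v z \<in> carrier_vec (Suc n)" using B z by simp
    have KBz: "K *\<^sub>v (B *\<^sub>v z) \<in> carrier_vec (Suc n)" using K Bz by simp
    have MBz: "m \<cdot>\<^sub>v (M *\<^sub>v (B *\<^sub>v z)) \<in> carrier_vec (Suc n)" using M Bz by simp
    define r where "r = K *\<^sub>v (B *\<^sub>v z) - m \<cdot>\<^sub>v (M *\<^sub>v (B *\<^sub>v z))"
    have r: "r \<in> carrier_vec (Suc n)" using KBz MBz by (simp add: r_def)
    have BT: "transpose_mat B \<in> carrier_mat n (Suc n)" using B by simp
    have BTK: "transpose_mat B * K \<in> carrier_mat n (Suc n)" using BT K by simp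
    have BTM: "transpose_mat B * M \<in> carrier_mat n (Suc n)" using BT M by simp
    have MBz': "M *\<^sub>v (B *\<^sub>v z) \<in> carrier_vec (Suc n)" using M Bz by simp
    have K1z: "K1 *\<^sub>v z = transpose_mat B *\<^sub>v (K *\<^sub>v (B *\<^sub>v z))"
      unfolding K1_def using assoc_mult_mat_vec[OF BTK B z] assoc_mult_mat_vec[OF BT K Bz] by simp
    have M1z: "M1 *\<^sub>v z = transpose_mat B *\<^sub>v (M *\<^sub>v (B *\<^sub>v z))"
      unfolding M1_def using assoc_mult_mat_vec[OF BTM B z] assoc_mult_mat_vec[OF BT M Bz] by simp
    have "transpose_mat B *\<^sub>v r = transpose_mat B *\<^sub>v (K *\<^sub>v (B *\<^sub>v z)) - transpose_mat B *\<^sub>v (m \<cdot>\<^sub>v (M *\<^sub>v (B *\<^sub>v z)))"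
      unfolding r_def by (rule mult_minus_distrib_mat_vec[OF BT KBz MBz])
    also have "transpose_mat B *\<^sub>v (K *\<^sub>v (B *\<^sub>v z)) = K1 *\<^sub>v z"
      using K1z by simp
    also have "transpose_mat B *\<^sub>v (m \<cdot>\<^sub>v (M *\<^sub>v (B *\<^sub>v z))) = m \<cdot>\<^sub>v (M1 *\<^sub>v z)"
      unfolding M1z by (rule mult_mat_vec[OF BT MBz'])
    finally have "transpose_mat B *\<^sub>v r = 0\<^sub>v n" unfolding e using M1 z by simp
    hence req: "r = (r $ p / u $ p) \<cdot>\<^sub>v u" using defl_kernel[OF u p r] unfolding B_def by blast
    have "v \<bullet> r = v \<bullet> (K *\<^sub>v (B *\<^sub>v z)) - v \<bullet> (m \<cdot>\<^sub>v (M *\<^sub>v (B *\<^sub>v z)))"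
      unfolding r_def by (rule scalar_prod_minus_distrib[OF v KBz MBz])
    also have "\<dots> = 0" using vKB[OF z] vMB[OF z] M Bz v
      by (simp add: scalar_prod_smult_distrib[of _ "Suc n"])
    finally have vr: "v \<bullet> r = 0" .
    have "v \<bullet> r = (r $ p / u $ p) * (v \<bullet> u)" using req u v
      by (metis scalar_prod_smult_distrib)
    hence c0: "r $ p / u $ p = 0" using vr vMv unfolding u_def by simp
    have "r = 0 \<cdot>\<^sub>v u" using req unfolding c0 .
    hence "r = 0\<^sub>v (Suc n)" using u by auto
    thus "K *\<^sub>v (B *\<^sub>v z) = m \<cdot>\<^sub>v (M *\<^sub>v (B *\<^sub>v z))"
      using vec_eq_of_diff[OF KBz MBz] unfolding r_def by blast
  qed
  have "eigsys (Suc n) K M ps"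
    unfolding eigsys_def
  proof (intro conjI; (intro allI impI)?)
    show "length ps = Suc n" using len by (simp add: ps_def)
  next
    fix j assume j: "j < Suc n"
    show "snd (ps ! j) \<in> carrier_vec (Suc n) \<and> K *\<^sub>v snd (ps ! j) = fst (ps ! j) \<cdot>\<^sub>v (M *\<^sub>v snd (ps ! j))"
    proof (cases j)
      case 0 thus ?thesis using v Kv ps0 by simp
    next
      case (Suc j')
      hence j': "j' < n" using j by simp
      show ?thesis unfolding Suc psS[OF j'] using B z1[OF j'] evB[OF z1[OF j'] ev1[OF j']] by simp
    qed
  next
    fix j k assume j: "j < Suc n" and k: "k < Suc n"
    show "snd (ps ! j) \<bullet> (M *\<^sub>v snd (ps ! k)) = (if j = k then 1 else 0)"
    proof (cases j)
      case 0
      show ?thesis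
      proof (cases k)
        case 0 thus ?thesis using \<open>j = 0\<close> ps0 vMv by simp
      next
        case (Suc k')
        hence k': "k' < n" using k by simp
        show ?thesis unfolding \<open>j = 0\<close> Suc ps0 psS[OF k'] using vMB[OF z1[OF k']] by simp
      qed
    next
      case (Suc j')
      hence j': "j' < n" using j by simp
      show ?thesis
      proof (cases k)
        case 0 thus ?thesis unfolding Suc psS[OF j'] using BMv[OF z1[OF j']] ps0 by simp
      next
        case (Suc k')
        hence k': "k' < n" using k by simp
        show ?thesis unfolding \<open>j = Suc j'\<close> Suc psS[OF j'] psS[OF k'] snd_conv
          using pull_form[OF B M z1[OF j'] z1[OF k']] on1[OF j' k'] unfolding M1_def by simp
      qed
    qed
  qed
  thus ?case by blast
qed

lemma mult_unit_col:
  fixes A :: "real mat"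
  assumes A: "A \<in> carrier_mat m n" and k: "k < n"
  shows "A *\<^sub>v unit_vec n k = col A k"
proof (rule eq_vecI)
  fix i assume "i < dim_vec (col A k)"
  hence i: "i < m" using A by simp
  have "row A i \<in> carrier_vec n" by (rule carrier_vecI) (use A in simp)
  hence "row A i \<bullet> unit_vec n k = row A i $ k"
    using comm_scalar_prod[OF \<open>row A i \<in> carrier_vec n\<close> unit_vec_carrier[of n k]]
      scalar_prod_left_unit[OF \<open>row A i \<in> carrier_vec n\<close> k] by simp
  thus "(A *\<^sub>v unit_vec n k) $ i = col A k $ i" using A i k by simp
qed (use A in simp)

lemma mat_entry_form:
  fixes A :: "real mat"
  assumes A: "A \<in> carrier_mat n n" and j: "j < n" and k: "k < n"
  shows "A $$ (j,k) = unit_vec n j \<bullet> (A *\<^sub>v unit_vec n k)"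
  unfolding mult_unit_col[OF A k] using A j k
  by (subst scalar_prod_left_unit[of _ n]) auto

lemma congr_entry:
  fixes S :: "real mat"
  assumes S: "S \<in> carrier_mat n n" and ws: "set ws \<subseteq> carrier_vec n" and len: "length ws = n"
    and j: "j < n" and k: "k < n"
  shows "(transpose_mat (mat_of_cols n ws) * S * mat_of_cols n ws) $$ (j,k) = ws ! j \<bullet> (S *\<^sub>v ws ! k)"
proof -
  let ?V = "mat_of_cols n ws"
  have V: "?V \<in> carrier_mat n n" using mat_of_cols_carrier(1)[of n ws] unfolding len .
  have C: "transpose_mat ?V * S * ?V \<in> carrier_mat n n" using V S by (meson mult_carrier_mat transpose_carrier_mat)
  have Vu: "\<And>i. i < n \<Longrightarrow> ?V *\<^sub>v unit_vec n i = ws ! i"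
  proof -
    fix i assume i: "i < n"
    have "ws ! i \<in> set ws" using i len by simp
    hence wi: "ws ! i \<in> carrier_vec n" using ws by blast
    have "?V *\<^sub>v unit_vec n i = col ?V i" by (rule mult_unit_col[OF V i])
    also have "col ?V i = ws ! i" by (rule col_mat_of_cols) (use i len wi in auto)
    finally show "?V *\<^sub>v unit_vec n i = ws ! i" .
  qed
  have "(transpose_mat ?V * S * ?V) $$ (j,k) = unit_vec n j \<bullet> ((transpose_mat ?V * S * ?V) *\<^sub>v unit_vec n k)"
    by (rule mat_entry_form[OF C j k])
  also have "\<dots> = (?V *\<^sub>v unit_vec n j) \<bullet> (S *\<^sub>v (?V *\<^sub>v unit_vec n k))"
    by (rule pull_form[OF V S unit_vec_carrier unit_vec_carrier])
  also have "\<dots> = ws ! j \<bullet> (S *\<^sub>v ws ! k)" unfolding Vu[OF j] Vu[OF k] ..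
  finally show ?thesis .
qed

lemma smult_mat_vec:
  fixes M :: "real mat"
  assumes M: "M \<in> carrier_mat n n" and w: "w \<in> carrier_vec n"
  shows "(y \<cdot>\<^sub>m M) *\<^sub>v w = y \<cdot>\<^sub>v (M *\<^sub>v w)"
proof (rule eq_vecI)
  fix i assume "i < dim_vec (y \<cdot>\<^sub>v (M *\<^sub>v w))"
  hence i: "i < n" using M by simp
  show "((y \<cdot>\<^sub>m M) *\<^sub>v w) $ i = (y \<cdot>\<^sub>v (M *\<^sub>v w)) $ i"
    using M w i by (simp add: scalar_prod_def sum_distrib_left mult.assoc)
qed (use M in simp)

lemma eigsys_det:
  fixes K M :: "real mat"
  assumes K: "K \<in> carrier_mat n n" and M: "M \<in> carrier_mat n n" and es: "eigsys n K M ps"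
  shows "det (x \<cdot>\<^sub>m M - K) = det M * prod_list (map (\<lambda>l. x - l) (map fst ps))"
proof -
  define ws where "ws = map snd ps"
  have len: "length ws = n" using es by (simp add: eigsys_def ws_def)
  have wsj: "\<And>j. j < n \<Longrightarrow> ws ! j = snd (ps ! j)" using len by (simp add: ws_def)
  have wc: "\<And>j. j < n \<Longrightarrow> ws ! j \<in> carrier_vec n" using es wsj by (simp add: eigsys_def)
  have wsc: "set ws \<subseteq> carrier_vec n"
  proof
    fix x assume "x \<in> set ws"
    then obtain i where "i < n" "x = ws ! i" using len by (auto simp: in_set_conv_nth)
    thus "x \<in> carrier_vec n" using wc by simp
  qed
  have ev: "\<And>j. j < n \<Longrightarrow> K *\<^sub>v ws ! j = fst (ps ! j) \<cdot>\<^sub>v (M *\<^sub>v ws ! j)"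
    using es wsj by (simp add: eigsys_def)
  have on: "\<And>j k. j < n \<Longrightarrow> k < n \<Longrightarrow> ws ! j \<bullet> (M *\<^sub>v ws ! k) = (if j = k then 1 else 0)"
    using es wsj by (simp add: eigsys_def)
  define V where "V = mat_of_cols n ws"
  have V: "V \<in> carrier_mat n n" using mat_of_cols_carrier(1)[of n ws] unfolding len V_def .
  have key: "\<And>y. transpose_mat V * (y \<cdot>\<^sub>m M - K) * V = mat n n (\<lambda>(j,k). if j = k then y - fst (ps ! j) else 0)"
  proof -
    fix y :: real
    have S: "y \<cdot>\<^sub>m M - K \<in> carrier_mat n n" using K by (rule minus_carrier_mat)
    show "transpose_mat V * (y \<cdot>\<^sub>m M - K) * V = mat n n (\<lambda>(j,k). if j = k then y - fst (ps ! j) else 0)"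
    proof (rule eq_matI)
      fix j k assume j: "j < dim_row (mat n n (\<lambda>(j,k). if j = k then y - fst (ps ! j) else 0) :: real mat)"
        and k: "k < dim_col (mat n n (\<lambda>(j,k). if j = k then y - fst (ps ! j) else 0) :: real mat)"
      hence j: "j < n" and k: "k < n" by auto
      have Mw: "M *\<^sub>v ws ! k \<in> carrier_vec n" using M wc[OF k] by simp
      have Kw: "K *\<^sub>v ws ! k \<in> carrier_vec n" using K wc[OF k] by simp
      have "(y \<cdot>\<^sub>m M - K) *\<^sub>v ws ! k = y \<cdot>\<^sub>v (M *\<^sub>v ws ! k) - K *\<^sub>v ws ! k"
        using minus_mult_distrib_mat_vec[of "y \<cdot>\<^sub>m M" n n K "ws ! k"] M K wc[OF k]
        by (simp add: smult_mat_vec)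
      hence "ws ! j \<bullet> ((y \<cdot>\<^sub>m M - K) *\<^sub>v ws ! k) = y * (ws ! j \<bullet> (M *\<^sub>v ws ! k)) - fst (ps ! k) * (ws ! j \<bullet> (M *\<^sub>v ws ! k))"
        using ev[OF k] wc[OF j] Mw Kw
        by (simp add: scalar_prod_minus_distrib[of _ n] scalar_prod_smult_distrib[of _ n])
      thus "(transpose_mat V * (y \<cdot>\<^sub>m M - K) * V) $$ (j, k) = mat n n (\<lambda>(j,k). if j = k then y - fst (ps ! j) else 0) $$ (j, k)"
        unfolding V_def congr_entry[OF S wsc len j k] using on[OF j k] j k by (cases "j = k") auto
    qed (use V in auto)
  qed
  have dV: "\<And>S. S \<in> carrier_mat n n \<Longrightarrow> det (transpose_mat V * S * V) = det V * det V * det S"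
  proof -
    fix S :: "real mat" assume S: "S \<in> carrier_mat n n"
    have "det (transpose_mat V * S * V) = det (transpose_mat V * S) * det V"
      using V S by (simp add: det_mult[of _ n])
    also have "\<dots> = det V * det S * det V" using V S by (simp add: det_mult[of _ n] det_transpose)
    finally show "det (transpose_mat V * S * V) = det V * det V * det S" by simp
  qed
  have dm: "\<And>y. det (mat n n (\<lambda>(j,k). if j = k then y - fst (ps ! j) else 0) :: real mat) = prod_list (map (\<lambda>l. y - l) (map fst ps))"
  proof -
    fix y :: real
    have "det (mat n n (\<lambda>(j,k). if j = k then y - fst (ps ! j) else 0) :: real mat) = prod_list (diag_mat (mat n n (\<lambda>(j,k). if j = k then y - fst (ps ! j) else 0) :: real mat))"
      by (rule det_upper_triangular) (auto simp: upper_triangular_def)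
    also have "diag_mat (mat n n (\<lambda>(j,k). if j = k then y - fst (ps ! j) else 0) :: real mat) = map (\<lambda>l. y - l) (map fst ps)"
      using len es by (auto simp: diag_mat_def eigsys_def intro!: nth_equalityI)
    finally show "det (mat n n (\<lambda>(j,k). if j = k then y - fst (ps ! j) else 0) :: real mat) = prod_list (map (\<lambda>l. y - l) (map fst ps))" .
  qed
  have M1: "det V * det V * det (1 \<cdot>\<^sub>m M - K + K) = 1"
  proof -
    have "1 \<cdot>\<^sub>m M - K + K = M" using M K by (auto intro!: eq_matI)
    moreover have "transpose_mat V * M * V = 1\<^sub>m n"
    proof (rule eq_matI)
      fix j k assume "j < dim_row (1\<^sub>m n :: real mat)" "k < dim_col (1\<^sub>m n :: real mat)"
      hence j: "j < n" and k: "k < n" by auto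
      show "(transpose_mat V * M * V) $$ (j, k) = 1\<^sub>m n $$ (j, k)"
        unfolding V_def congr_entry[OF M wsc len j k] using on[OF j k] j k by simp
    qed (use V in auto)
    ultimately show ?thesis using dV[OF M] by simp
  qed
  have "det V * det V * det (x \<cdot>\<^sub>m M - K) = prod_list (map (\<lambda>l. x - l) (map fst ps))"
    using dV[OF minus_carrier_mat[OF K, of "x \<cdot>\<^sub>m M"]] key[of x] dm[of x] by simp
  hence h1: "det M * (det V * det V * det (x \<cdot>\<^sub>m M - K)) = det M * prod_list (map (\<lambda>l. x - l) (map fst ps))" by simp
  have "1 \<cdot>\<^sub>m M - K + K = M" using M K by (auto intro!: eq_matI)
  hence h2: "det M * (det V * det V) = 1" using M1 by (simp add: mult.commute)
  have "det (x \<cdot>\<^sub>m M - K) = (det M * (det V * det V)) * det (x \<cdot>\<^sub>m M - K)" using h2 by simp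
  also have "\<dots> = det M * (det V * det V * det (x \<cdot>\<^sub>m M - K))" by (simp add: mult.assoc)
  finally show ?thesis using h1 by simp
qed

definition lpoly :: "real list \<Rightarrow> real poly" where
  "lpoly ls = prod_list (map (\<lambda>l. [:-l, 1:]) ls)"

lemma poly_lpoly: "poly (lpoly ls) x = prod_list (map (\<lambda>l. x - l) ls)"
  by (induction ls) (auto simp: lpoly_def algebra_simps)

lemma lpoly_mset: "lpoly ls = prod_mset (image_mset (\<lambda>l. [:-l, 1:]) (mset ls))"
  unfolding lpoly_def by (metis mset_map prod_mset_prod_list)

lemma lpoly_mset_eq: "lpoly ls1 = lpoly ls2 \<Longrightarrow> mset ls1 = mset ls2"
proof (induction ls1 arbitrary: ls2)
  case Nil
  show ?case
  proof (cases ls2)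
    case (Cons b r)
    have "poly (lpoly ls2) b = 0" unfolding poly_lpoly Cons by simp
    moreover have "poly (lpoly []) b = 1" unfolding poly_lpoly by simp
    ultimately show ?thesis using Nil.prems by simp
  next
    case Nil
    thus ?thesis by simp
  qed
next
  case (Cons a r)
  have "poly (lpoly ls2) a = 0" unfolding Cons.prems[symmetric] poly_lpoly by simp
  hence "prod_list (map (\<lambda>l. a - l) ls2) = 0" unfolding poly_lpoly .
  hence "a \<in> set ls2" unfolding prod_list_zero_iff by auto
  hence ams: "a \<in># mset ls2" by simp
  have ms: "mset ls2 = add_mset a (mset (remove1 a ls2))"
    unfolding mset_remove1 using insert_DiffM[OF ams] by simp
  have "lpoly ls2 = [:-a, 1:] * lpoly (remove1 a ls2)"
    unfolding lpoly_mset ms by simp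
  moreover have "lpoly (a # r) = [:-a, 1:] * lpoly r" by (simp add: lpoly_def)
  ultimately have e: "[:-a, 1:] * lpoly r = [:-a, 1:] * lpoly (remove1 a ls2)"
    using Cons.prems by simp
  have nz: "[:-a, 1:] \<noteq> (0::real poly)" by simp
  have "lpoly r = lpoly (remove1 a ls2)" by (rule iffD1[OF mult_left_cancel[OF nz] e])
  hence "mset r = mset (remove1 a ls2)" by (rule Cons.IH)
  hence "mset (a # r) = add_mset a (mset (remove1 a ls2))" by (simp del: mset_remove1)
  thus ?case using ms by (simp del: mset_remove1)
qed

lemma gen_eigs_eq:
  fixes K M :: "real mat"
  assumes K: "K \<in> carrier_mat n n" and M: "M \<in> carrier_mat n n" and dM: "det M \<noteq> 0"
    and es: "eigsys n K M ps" and so: "sorted (map fst ps)"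
  shows "gen_eigs K M = map fst ps"
  unfolding gen_eigs_def
proof (rule the_equality)
  show "length (map fst ps) = dim_row K \<and> sorted (map fst ps) \<and>
    (\<forall>x. det (x \<cdot>\<^sub>m M - K) = det M * prod_list (map ((-) x) (map fst ps)))"
    using es so K eigsys_det[OF K M es] by (auto simp: eigsys_def)
next
  fix ls assume h: "length ls = dim_row K \<and> sorted ls \<and>
    (\<forall>x. det (x \<cdot>\<^sub>m M - K) = det M * prod_list (map ((-) x) ls))"
  have "\<forall>x. prod_list (map ((-) x) ls) = prod_list (map ((-) x) (map fst ps))"
    using h eigsys_det[OF K M es] dM by auto
  hence "poly (lpoly ls) = poly (lpoly (map fst ps))" unfolding poly_lpoly by auto
  hence "lpoly ls = lpoly (map fst ps)" by (simp add: poly_eq_poly_eq_iff)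
  hence "mset ls = mset (map fst ps)" by (rule lpoly_mset_eq)
  hence "sort (map fst ps) = ls" using h by (intro properties_for_sort) auto
  moreover have "sort (map fst ps) = map fst ps" using so by (simp add: sorted_sort_id)
  ultimately show "ls = map fst ps" by simp
qed

lemma eigsys_sorted:
  assumes es: "eigsys n K M ps"
  shows "\<exists>ps'. eigsys n K M ps' \<and> sorted (map fst ps')"
proof -
  define ps' where "ps' = sort_key fst ps"
  have len: "length ps = n" using es by (simp add: eigsys_def)
  have ev: "\<And>j. j < n \<Longrightarrow> snd (ps!j) \<in> carrier_vec n \<and> K *\<^sub>v snd (ps!j) = fst (ps!j) \<cdot>\<^sub>v (M *\<^sub>v snd (ps!j))"
    using es by (simp add: eigsys_def)
  have on: "\<And>j k. j < n \<Longrightarrow> k < n \<Longrightarrow> snd (ps!j) \<bullet> (M *\<^sub>v snd (ps!k)) = (if j = k then 1 else 0)"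
    using es by (simp add: eigsys_def)
  have dist: "distinct ps"
    unfolding distinct_conv_nth
  proof (intro allI impI)
    fix i j assume i: "i < length ps" and j: "j < length ps" and ij: "i \<noteq> j"
    show "ps ! i \<noteq> ps ! j"
    proof
      assume e: "ps ! i = ps ! j"
      have "snd (ps!i) \<bullet> (M *\<^sub>v snd (ps!j)) = 0" using on[of i j] i j ij len by simp
      moreover have "snd (ps!i) \<bullet> (M *\<^sub>v snd (ps!j)) = 1" using on[of i i] i len e by simp
      ultimately show False by simp
    qed
  qed
  have len': "length ps' = n" using len by (simp add: ps'_def)
  have set': "set ps' = set ps" by (simp add: ps'_def)
  have dist': "distinct ps'" using dist by (simp add: ps'_def distinct_sort)
  have idx: "\<And>j. j < n \<Longrightarrow> \<exists>a<n. ps' ! j = ps ! a"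
  proof -
    fix j assume "j < n"
    hence "ps' ! j \<in> set ps'" using len' by simp
    hence "ps' ! j \<in> set ps" using set' by simp
    then obtain a where "a < length ps" "ps ! a = ps' ! j" unfolding in_set_conv_nth by blast
    thus "\<exists>a<n. ps' ! j = ps ! a" using len by auto
  qed
  have "eigsys n K M ps'"
    unfolding eigsys_def
  proof (intro conjI allI impI)
    show "length ps' = n" by (rule len')
  next
    fix j assume j: "j < n"
    obtain a where a: "a < n" "ps' ! j = ps ! a" using idx[OF j] by blast
    show "snd (ps' ! j) \<in> carrier_vec n" using ev[OF a(1)] a by simp
    show "K *\<^sub>v snd (ps' ! j) = fst (ps' ! j) \<cdot>\<^sub>v (M *\<^sub>v snd (ps' ! j))" using ev[OF a(1)] a by simp
  next
    fix j k assume j: "j < n" and k: "k < n"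
    obtain a where a: "a < n" "ps' ! j = ps ! a" using idx[OF j] by blast
    obtain b where b: "b < n" "ps' ! k = ps ! b" using idx[OF k] by blast
    have "a = b \<longleftrightarrow> j = k"
    proof
      assume "a = b"
      hence "ps' ! j = ps' ! k" using a b by simp
      thus "j = k" using dist' j k len' by (simp add: nth_eq_iff_index_eq)
    next
      assume "j = k"
      hence "ps ! a = ps ! b" using a b by simp
      thus "a = b" using dist a b len by (simp add: nth_eq_iff_index_eq)
    qed
    thus "snd (ps' ! j) \<bullet> (M *\<^sub>v snd (ps' ! k)) = (if j = k then 1 else 0)"
      using on[OF a(1) b(1)] a b by simp
  qed
  moreover have "sorted (map fst ps')" by (simp add: ps'_def sorted_sort_key)
  ultimately show ?thesis by blast
qed

lemma dep_vectors:
  fixes f :: "nat \<Rightarrow> real vec"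
  assumes f: "\<And>k. k < Suc n \<Longrightarrow> f k \<in> carrier_vec n"
  shows "\<exists>cf. (\<exists>k<Suc n. cf k \<noteq> 0) \<and> (\<forall>r<n. (\<Sum>k<Suc n. cf k * f k $ r) = 0)"
proof -
  define c where "c = (\<lambda>r. vec (Suc n) (\<lambda>k. f k $ r) :: real vec)"
  define A where "A = mat\<^sub>r (Suc n) (Suc n) (\<lambda>i. if i = n then 0\<^sub>v (Suc n) else c i)"
  have A: "A \<in> carrier_mat (Suc n) (Suc n)" unfolding A_def by simp
  have "det A = 0" unfolding A_def
    by (rule det_row_0) (auto simp: c_def)
  then obtain v where v: "v \<in> carrier_vec (Suc n)" "v \<noteq> 0\<^sub>v (Suc n)" "A *\<^sub>v v = 0\<^sub>v (Suc n)"
    using det_0_iff_vec_prod_zero[OF A] by blast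
  have ex: "\<exists>k<Suc n. v $ k \<noteq> 0"
  proof (rule ccontr)
    assume "\<not> ?thesis"
    hence "v = 0\<^sub>v (Suc n)" using v(1) by (intro eq_vecI) auto
    with v(2) show False by simp
  qed
  have "\<forall>r<n. (\<Sum>k<Suc n. v $ k * f k $ r) = 0"
  proof (intro allI impI)
    fix r assume r: "r < n"
    have "(A *\<^sub>v v) $ r = 0" using v(3) r by simp
    moreover have "(A *\<^sub>v v) $ r = row A r \<bullet> v" using A r by simp
    moreover have "row A r = c r" unfolding A_def using r by (simp add: c_def)
    moreover have "c r \<bullet> v = (\<Sum>k<Suc n. v $ k * f k $ r)"
      using v(1) by (simp add: c_def scalar_prod_def atLeast0LessThan mult.commute)
    ultimately show "(\<Sum>k<Suc n. v $ k * f k $ r) = 0" by simp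
  qed
  with ex show ?thesis by blast
qed

lemma mat_vec_lin:
  fixes A :: "real mat"
  assumes A: "A \<in> carrier_mat n n" and w: "\<And>j. j \<in> J \<Longrightarrow> w j \<in> carrier_vec n"
  shows "A *\<^sub>v vec n (\<lambda>r. \<Sum>j\<in>J. a j * w j $ r) = vec n (\<lambda>r. \<Sum>j\<in>J. a j * (A *\<^sub>v w j) $ r)"
proof (rule eq_vecI)
  fix r assume "r < dim_vec (vec n (\<lambda>r. \<Sum>j\<in>J. a j * (A *\<^sub>v w j) $ r))"
  hence r: "r < n" by simp
  have "(A *\<^sub>v vec n (\<lambda>r. \<Sum>j\<in>J. a j * w j $ r)) $ r = (\<Sum>s<n. A $$ (r,s) * (\<Sum>j\<in>J. a j * w j $ s))"
    using A r by (simp add: scalar_prod_def atLeast0LessThan)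
  also have "\<dots> = (\<Sum>s<n. \<Sum>j\<in>J. a j * (A $$ (r,s) * w j $ s))"
    by (simp add: sum_distrib_left mult.left_commute)
  also have "\<dots> = (\<Sum>j\<in>J. \<Sum>s<n. a j * (A $$ (r,s) * w j $ s))" by (rule sum.swap)
  also have "\<dots> = (\<Sum>j\<in>J. a j * (A *\<^sub>v w j) $ r)"
  proof (rule sum.cong)
    fix j assume j: "j \<in> J"
    show "(\<Sum>s<n. a j * (A $$ (r,s) * w j $ s)) = a j * (A *\<^sub>v w j) $ r"
      using A r w[OF j] by (simp add: scalar_prod_def atLeast0LessThan sum_distrib_left)
  qed simp
  finally show "(A *\<^sub>v vec n (\<lambda>r. \<Sum>j\<in>J. a j * w j $ r)) $ r = vec n (\<lambda>r. \<Sum>j\<in>J. a j * (A *\<^sub>v w j) $ r) $ r"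
    using r by simp
qed (use A in simp)

lemma dot_lin:
  fixes y :: "real vec"
  assumes y: "y \<in> carrier_vec n" and w: "\<And>j. j \<in> J \<Longrightarrow> w j \<in> carrier_vec n"
  shows "vec n (\<lambda>r. \<Sum>j\<in>J. a j * w j $ r) \<bullet> y = (\<Sum>j\<in>J. a j * (w j \<bullet> y))"
proof -
  have "vec n (\<lambda>r. \<Sum>j\<in>J. a j * w j $ r) \<bullet> y = (\<Sum>r<n. (\<Sum>j\<in>J. a j * w j $ r) * y $ r)"
    using y by (simp add: scalar_prod_def atLeast0LessThan)
  also have "\<dots> = (\<Sum>r<n. \<Sum>j\<in>J. a j * (w j $ r * y $ r))"
    by (simp add: sum_distrib_right mult.assoc)
  also have "\<dots> = (\<Sum>j\<in>J. \<Sum>r<n. a j * (w j $ r * y $ r))" by (rule sum.swap)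
  also have "\<dots> = (\<Sum>j\<in>J. a j * (w j \<bullet> y))"
  proof (rule sum.cong)
    fix j assume j: "j \<in> J"
    show "(\<Sum>r<n. a j * (w j $ r * y $ r)) = a j * (w j \<bullet> y)"
      using y w[OF j] by (simp add: scalar_prod_def atLeast0LessThan sum_distrib_left)
  qed simp
  finally show ?thesis .
qed

definition comb :: "nat \<Rightarrow> (real \<times> real vec) list \<Rightarrow> (nat \<Rightarrow> real) \<Rightarrow> nat set \<Rightarrow> real vec" where
  "comb n ps a J = vec n (\<lambda>r. \<Sum>j\<in>J. a j * snd (ps ! j) $ r)"

lemma comb_forms:
  fixes K M :: "real mat"
  assumes K: "K \<in> carrier_mat n n" and M: "M \<in> carrier_mat n n" and es: "eigsys n K M ps"
    and J: "J \<subseteq> {..<n}"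
  shows "comb n ps a J \<in> carrier_vec n"
    "comb n ps a J \<bullet> (M *\<^sub>v comb n ps a J) = (\<Sum>j\<in>J. a j ^ 2)"
    "comb n ps a J \<bullet> (K *\<^sub>v comb n ps a J) = (\<Sum>j\<in>J. a j ^ 2 * fst (ps ! j))"
proof -
  let ?x = "comb n ps a J"
  let ?w = "\<lambda>j. snd (ps ! j)"
  have finJ: "finite J" using J finite_subset by blast
  have wc: "\<And>j. j \<in> J \<Longrightarrow> ?w j \<in> carrier_vec n" using es J by (auto simp: eigsys_def)
  have Mwc: "\<And>j. j \<in> J \<Longrightarrow> M *\<^sub>v ?w j \<in> carrier_vec n" using wc M by simp
  have ev: "\<And>j. j \<in> J \<Longrightarrow> K *\<^sub>v ?w j = fst (ps ! j) \<cdot>\<^sub>v (M *\<^sub>v ?w j)" using es J by (auto simp: eigsys_def)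
  have on: "\<And>j k. j \<in> J \<Longrightarrow> k \<in> J \<Longrightarrow> ?w k \<bullet> (M *\<^sub>v ?w j) = (if k = j then 1 else 0)"
  proof -
    fix j k assume "j \<in> J" "k \<in> J"
    hence "j < n" "k < n" using J by auto
    thus "?w k \<bullet> (M *\<^sub>v ?w j) = (if k = j then 1 else 0)" using es unfolding eigsys_def by blast
  qed
  show xc: "?x \<in> carrier_vec n" by (simp add: comb_def)
  have xMw: "\<And>j. j \<in> J \<Longrightarrow> ?x \<bullet> (M *\<^sub>v ?w j) = a j"
  proof -
    fix j assume j: "j \<in> J"
    have "?x \<bullet> (M *\<^sub>v ?w j) = (\<Sum>k\<in>J. a k * (?w k \<bullet> (M *\<^sub>v ?w j)))"
      unfolding comb_def by (rule dot_lin[OF Mwc[OF j] wc])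
    also have "\<dots> = (\<Sum>k\<in>J. if k = j then a k else 0)"
      by (rule sum.cong) (use on[OF j] in auto)
    also have "\<dots> = a j" using j finJ by (simp add: sum.delta)
    finally show "?x \<bullet> (M *\<^sub>v ?w j) = a j" .
  qed
  have gen: "\<And>b. ?x \<bullet> vec n (\<lambda>r. \<Sum>j\<in>J. b j * (M *\<^sub>v ?w j) $ r) = (\<Sum>j\<in>J. b j * a j)"
  proof -
    fix b :: "nat \<Rightarrow> real"
    have "?x \<bullet> vec n (\<lambda>r. \<Sum>j\<in>J. b j * (M *\<^sub>v ?w j) $ r) = vec n (\<lambda>r. \<Sum>j\<in>J. b j * (M *\<^sub>v ?w j) $ r) \<bullet> ?x"
      by (rule comm_scalar_prod[OF xc]) simp
    also have "\<dots> = (\<Sum>j\<in>J. b j * ((M *\<^sub>v ?w j) \<bullet> ?x))" by (rule dot_lin[OF xc Mwc])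
    also have "\<dots> = (\<Sum>j\<in>J. b j * a j)"
    proof (rule sum.cong)
      fix j assume j: "j \<in> J"
      have "(M *\<^sub>v ?w j) \<bullet> ?x = ?x \<bullet> (M *\<^sub>v ?w j)" by (rule comm_scalar_prod[OF Mwc[OF j] xc])
      thus "b j * ((M *\<^sub>v ?w j) \<bullet> ?x) = b j * a j" using xMw[OF j] by simp
    qed simp
    finally show "?x \<bullet> vec n (\<lambda>r. \<Sum>j\<in>J. b j * (M *\<^sub>v ?w j) $ r) = (\<Sum>j\<in>J. b j * a j)" .
  qed
  have "M *\<^sub>v ?x = vec n (\<lambda>r. \<Sum>j\<in>J. a j * (M *\<^sub>v ?w j) $ r)"
    unfolding comb_def by (rule mat_vec_lin[OF M wc])
  thus "?x \<bullet> (M *\<^sub>v ?x) = (\<Sum>j\<in>J. a j ^ 2)" using gen[of a] by (simp add: power2_eq_square)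
  have "K *\<^sub>v ?x = vec n (\<lambda>r. \<Sum>j\<in>J. a j * (K *\<^sub>v ?w j) $ r)"
    unfolding comb_def by (rule mat_vec_lin[OF K wc])
  also have "\<dots> = vec n (\<lambda>r. \<Sum>j\<in>J. (a j * fst (ps ! j)) * (M *\<^sub>v ?w j) $ r)"
  proof (rule eq_vecI)
    fix r assume "r < dim_vec (vec n (\<lambda>r. \<Sum>j\<in>J. (a j * fst (ps ! j)) * (M *\<^sub>v ?w j) $ r))"
    hence r: "r < n" by simp
    have "(\<Sum>j\<in>J. a j * (K *\<^sub>v ?w j) $ r) = (\<Sum>j\<in>J. (a j * fst (ps ! j)) * (M *\<^sub>v ?w j) $ r)"
    proof (rule sum.cong)
      fix j assume j: "j \<in> J"
      show "a j * (K *\<^sub>v ?w j) $ r = (a j * fst (ps ! j)) * (M *\<^sub>v ?w j) $ r"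
        unfolding ev[OF j] using carrier_vecD[OF Mwc[OF j]] r by simp
    qed simp
    thus "vec n (\<lambda>r. \<Sum>j\<in>J. a j * (K *\<^sub>v ?w j) $ r) $ r = vec n (\<lambda>r. \<Sum>j\<in>J. (a j * fst (ps ! j)) * (M *\<^sub>v ?w j) $ r) $ r"
      using r by simp
  qed simp
  finally show "?x \<bullet> (K *\<^sub>v ?x) = (\<Sum>j\<in>J. a j ^ 2 * fst (ps ! j))"
    using gen[of "\<lambda>j. a j * fst (ps ! j)"] by (simp add: power2_eq_square mult.commute mult.left_commute)
qed

lemma compare_eigs:
  fixes K1 M1 K2 M2 :: "real mat"
  assumes K1: "K1 \<in> carrier_mat n n" and M1: "M1 \<in> carrier_mat n n"
    and K2: "K2 \<in> carrier_mat n n" and M2: "M2 \<in> carrier_mat n n"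
    and es1: "eigsys n K1 M1 ps1" and es2: "eigsys n K2 M2 ps2"
    and so1: "sorted (map fst ps1)" and so2: "sorted (map fst ps2)"
    and pd1: "\<forall>x\<in>carrier_vec n. x \<noteq> 0\<^sub>v n \<longrightarrow> x \<bullet> (M1 *\<^sub>v x) > 0"
    and pd2: "\<forall>x\<in>carrier_vec n. x \<noteq> 0\<^sub>v n \<longrightarrow> x \<bullet> (M2 *\<^sub>v x) > 0"
    and c: "c \<ge> 0"
    and hyp: "\<forall>x\<in>carrier_vec n. x \<noteq> 0\<^sub>v n \<longrightarrow>
       (x \<bullet> (K1 *\<^sub>v x)) * (x \<bullet> (M2 *\<^sub>v x)) \<le> c * (x \<bullet> (K2 *\<^sub>v x)) * (x \<bullet> (M1 *\<^sub>v x))"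
    and i: "i < n"
  shows "fst (ps1 ! i) \<le> c * fst (ps2 ! i)"
proof (rule ccontr)
  assume contra: "\<not> ?thesis"
  define t1 where "t1 = fst (ps1 ! i)"
  define t2 where "t2 = fst (ps2 ! i)"
  have len1: "length ps1 = n" and len2: "length ps2 = n" using es1 es2 by (auto simp: eigsys_def)
  have wc1: "\<And>j. j < n \<Longrightarrow> snd (ps1 ! j) \<in> carrier_vec n" using es1 by (simp add: eigsys_def)
  have wc2: "\<And>j. j < n \<Longrightarrow> snd (ps2 ! j) \<in> carrier_vec n" using es2 by (simp add: eigsys_def)
  define f where "f = (\<lambda>k. if k \<le> i then snd (ps2 ! k) else snd (ps1 ! (k - 1)))"
  have fc: "\<And>k. k < Suc n \<Longrightarrow> f k \<in> carrier_vec n"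
    unfolding f_def using wc1 wc2 i by auto
  obtain cf where cf0: "(\<exists>k<Suc n. cf k \<noteq> 0) \<and> (\<forall>r<n. (\<Sum>k<Suc n. cf k * f k $ r) = 0)"
    using dep_vectors[OF fc] ..
  note cf = conjunct1[OF cf0] conjunct2[OF cf0]
  define J2 where "J2 = {..i}"
  define J1 where "J1 = {i..<n}"
  have J2: "J2 \<subseteq> {..<n}" using i by (auto simp: J2_def)
  have J1: "J1 \<subseteq> {..<n}" by (auto simp: J1_def)
  define b where "b = (\<lambda>j. - cf (Suc j))"
  define x where "x = comb n ps2 cf J2"
  define y where "y = comb n ps1 b J1"
  have xy: "x = y"
  proof (rule eq_vecI)
    fix r assume "r < dim_vec y"
    hence r: "r < n" by (simp add: y_def comb_def)
    have split: "{..<Suc n} = {..i} \<union> {Suc i..<Suc n}" using i by auto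
    have "(\<Sum>k<Suc n. cf k * f k $ r) = (\<Sum>k\<in>{..i}. cf k * f k $ r) + (\<Sum>k\<in>{Suc i..<Suc n}. cf k * f k $ r)"
      unfolding split by (rule sum.union_disjoint) auto
    also have "(\<Sum>k\<in>{..i}. cf k * f k $ r) = (\<Sum>k\<in>J2. cf k * snd (ps2 ! k) $ r)"
      unfolding J2_def by (rule sum.cong) (auto simp: f_def)
    also have "(\<Sum>k\<in>{Suc i..<Suc n}. cf k * f k $ r) = (\<Sum>j\<in>{i..<n}. cf (Suc j) * f (Suc j) $ r)"
      by (rule sum.shift_bounds_Suc_ivl)
    also have "\<dots> = (\<Sum>j\<in>J1. cf (Suc j) * snd (ps1 ! j) $ r)"
      unfolding J1_def by (rule sum.cong) (auto simp: f_def)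
    finally have "(\<Sum>k\<in>J2. cf k * snd (ps2 ! k) $ r) = - (\<Sum>j\<in>J1. cf (Suc j) * snd (ps1 ! j) $ r)"
      using cf(2) r by simp
    also have "\<dots> = (\<Sum>j\<in>J1. b j * snd (ps1 ! j) $ r)"
      by (simp add: b_def sum_negf)
    finally show "x $ r = y $ r" using r by (simp add: x_def y_def comb_def)
  qed (simp add: x_def y_def comb_def)
  note fx = comb_forms[OF K2 M2 es2 J2, of cf, folded x_def]
  note fy = comb_forms[OF K1 M1 es1 J1, of b, folded y_def]
  have x0: "x \<noteq> 0\<^sub>v n"
  proof
    assume x0: "x = 0\<^sub>v n"
    have "(\<Sum>j\<in>J2. cf j ^ 2) = 0" using fx(2) x0 M2 by simp
    hence z2: "\<forall>j\<in>J2. cf j = 0" by (subst (asm) sum_nonneg_eq_0_iff) (auto simp: J2_def)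
    have "(\<Sum>j\<in>J1. b j ^ 2) = 0" using fy(2) x0 xy M1 by simp
    hence z1: "\<forall>j\<in>J1. b j = 0" by (subst (asm) sum_nonneg_eq_0_iff) (auto simp: J1_def)
    obtain k where k: "k < Suc n" "cf k \<noteq> 0" using cf(1) by blast
    show False
    proof (cases "k \<le> i")
      case True thus False using z2 k by (auto simp: J2_def)
    next
      case False
      hence "k - 1 \<in> J1" "Suc (k - 1) = k" using k by (auto simp: J1_def)
      thus False using z1 k by (metis b_def neg_equal_0_iff_equal)
    qed
  qed
  define A where "A = x \<bullet> (K1 *\<^sub>v x)"
  define B where "B = x \<bullet> (M1 *\<^sub>v x)"
  define C where "C = x \<bullet> (K2 *\<^sub>v x)"
  define D where "D = x \<bullet> (M2 *\<^sub>v x)"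
  have B: "B > 0" using pd1 x0 fx(1) by (simp add: B_def)
  have D: "D > 0" using pd2 x0 fx(1) by (simp add: D_def)
  have hAD: "A * D \<le> c * C * B" using hyp x0 fx(1) by (simp add: A_def B_def C_def D_def)
  have hC: "C \<le> t2 * D"
  proof -
    have "C = (\<Sum>j\<in>J2. cf j ^ 2 * fst (ps2 ! j))" using fx(3) by (simp add: C_def)
    also have "\<dots> \<le> (\<Sum>j\<in>J2. cf j ^ 2 * t2)"
    proof (rule sum_mono)
      fix j assume j: "j \<in> J2"
      have "fst (ps2 ! j) \<le> t2"
        using sorted_nth_mono[OF so2, of j i] j i len2 by (auto simp: J2_def t2_def)
      thus "cf j ^ 2 * fst (ps2 ! j) \<le> cf j ^ 2 * t2" by (simp add: mult_left_mono)
    qed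
    also have "\<dots> = t2 * D" using fx(2) by (simp add: D_def sum_distrib_left mult.commute)
    finally show ?thesis .
  qed
  have hA: "t1 * B \<le> A"
  proof -
    have "t1 * B = (\<Sum>j\<in>J1. b j ^ 2 * t1)" using fy(2) xy by (simp add: B_def sum_distrib_left mult.commute)
    also have "\<dots> \<le> (\<Sum>j\<in>J1. b j ^ 2 * fst (ps1 ! j))"
    proof (rule sum_mono)
      fix j assume j: "j \<in> J1"
      have "t1 \<le> fst (ps1 ! j)"
        using sorted_nth_mono[OF so1, of i j] j i len1 by (auto simp: J1_def t1_def)
      thus "b j ^ 2 * t1 \<le> b j ^ 2 * fst (ps1 ! j)" by (simp add: mult_left_mono)
    qed
    also have "\<dots> = A" using fy(3) xy by (simp add: A_def)
    finally show ?thesis .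
  qed
  have "t1 * B * D \<le> A * D" using hA D by (simp add: mult_right_mono)
  also have "\<dots> \<le> c * C * B" by (rule hAD)
  also have "\<dots> \<le> c * (t2 * D) * B" using hC c B by (simp add: mult_left_mono mult_right_mono)
  finally have "t1 * (B * D) \<le> (c * t2) * (B * D)" by (simp add: algebra_simps)
  hence "t1 \<le> c * t2" using B D by (simp add: mult_le_cancel_right)
  thus False using contra by (simp add: t1_def t2_def)
qed

lemma qf_double:
  fixes S :: "real mat"
  assumes S: "S \<in> carrier_mat n n" and x: "x \<in> carrier_vec n"
  shows "x \<bullet> (S *\<^sub>v x) = (\<Sum>i<n. \<Sum>j<n. x $ i * S $$ (i,j) * x $ j)"
  using S x by (simp add: scalar_prod_def atLeast0LessThan sum_distrib_left mult.assoc)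

lemma qf_matsum:
  fixes B :: "nat \<Rightarrow> real mat"
  assumes B: "\<And>e. e < N \<Longrightarrow> B e \<in> carrier_mat n n" and x: "x \<in> carrier_vec n"
  shows "x \<bullet> (mat n n (\<lambda>(i,j). \<Sum>e<N. B e $$ (i,j)) *\<^sub>v x) = (\<Sum>e<N. x \<bullet> (B e *\<^sub>v x))"
proof -
  have S: "mat n n (\<lambda>(i,j). \<Sum>e<N. B e $$ (i,j)) \<in> carrier_mat n n" by simp
  have "x \<bullet> (mat n n (\<lambda>(i,j). \<Sum>e<N. B e $$ (i,j)) *\<^sub>v x) =
      (\<Sum>i<n. \<Sum>j<n. x $ i * (\<Sum>e<N. B e $$ (i,j)) * x $ j)"
    unfolding qf_double[OF S x] by (rule sum.cong, simp, rule sum.cong, simp_all)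
  also have "\<dots> = (\<Sum>i<n. \<Sum>j<n. \<Sum>e<N. x $ i * B e $$ (i,j) * x $ j)"
    by (simp add: sum_distrib_left sum_distrib_right)
  also have "\<dots> = (\<Sum>i<n. \<Sum>e<N. \<Sum>j<n. x $ i * B e $$ (i,j) * x $ j)"
    by (rule sum.cong, simp, rule sum.swap)
  also have "\<dots> = (\<Sum>e<N. \<Sum>i<n. \<Sum>j<n. x $ i * B e $$ (i,j) * x $ j)"
    by (rule sum.swap)
  also have "\<dots> = (\<Sum>e<N. x \<bullet> (B e *\<^sub>v x))"
    by (rule sum.cong, simp, rule qf_double[OF B x, symmetric], simp)
  finally show ?thesis .
qed

lemma gather_mult:
  assumes f: "\<And>k. k < m \<Longrightarrow> f k < n" and x: "x \<in> carrier_vec n"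
  shows "gather_mat m n f *\<^sub>v x = vec m (\<lambda>k. x $ f k)"
proof (rule eq_vecI)
  fix k assume "k < dim_vec (vec m (\<lambda>k. x $ f k))"
  hence k: "k < m" by simp
  have "(gather_mat m n f *\<^sub>v x) $ k = (\<Sum>j<n. (if j = f k then 1 else 0) * x $ j)"
    using x k by (simp add: gather_mat_def scalar_prod_def atLeast0LessThan)
  also have "\<dots> = (\<Sum>j<n. if j = f k then x $ j else 0)" by (rule sum.cong) auto
  also have "\<dots> = x $ f k" using f[OF k] by (simp add: sum.delta)
  finally show "(gather_mat m n f *\<^sub>v x) $ k = vec m (\<lambda>k. x $ f k) $ k" using k by simp
qed (simp add: gather_mat_def)

lemma gather_carrier: "gather_mat m n f \<in> carrier_mat m n" by (simp add: gather_mat_def)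

lemma assemble_qf:
  assumes A: "\<And>e. e < N \<Longrightarrow> Ae e \<in> carrier_mat m m"
    and f: "\<And>e k. e < N \<Longrightarrow> k < m \<Longrightarrow> idx e k < n" and x: "x \<in> carrier_vec n"
  shows "x \<bullet> (assemble m n N idx Ae *\<^sub>v x) =
    (\<Sum>e<N. vec m (\<lambda>k. x $ idx e k) \<bullet> (Ae e *\<^sub>v vec m (\<lambda>k. x $ idx e k)))"
proof -
  let ?B = "\<lambda>e. transpose_mat (gather_mat m n (idx e)) * Ae e * gather_mat m n (idx e)"
  have B: "\<And>e. e < N \<Longrightarrow> ?B e \<in> carrier_mat n n" using A gather_carrier
    by (meson mult_carrier_mat transpose_carrier_mat)
  have "x \<bullet> (assemble m n N idx Ae *\<^sub>v x) = (\<Sum>e<N. x \<bullet> (?B e *\<^sub>v x))"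
    unfolding assemble_def by (rule qf_matsum[OF B x])
  also have "\<dots> = (\<Sum>e<N. vec m (\<lambda>k. x $ idx e k) \<bullet> (Ae e *\<^sub>v vec m (\<lambda>k. x $ idx e k)))"
  proof (rule sum.cong)
    fix e assume "e \<in> {..<N}"
    hence e: "e < N" by simp
    show "x \<bullet> (?B e *\<^sub>v x) = vec m (\<lambda>k. x $ idx e k) \<bullet> (Ae e *\<^sub>v vec m (\<lambda>k. x $ idx e k))"
      using pull_form[OF gather_carrier A[OF e] x x] gather_mult[OF f[OF e] x] by simp
  qed simp
  finally show ?thesis .
qed

lemma assemble_carrier: "assemble m n N idx Ae \<in> carrier_mat n n" by (simp add: assemble_def)

lemma assemble_sym:
  assumes A: "\<And>e. e < N \<Longrightarrow> Ae e \<in> carrier_mat m m"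
    and sym: "\<And>e. e < N \<Longrightarrow> transpose_mat (Ae e) = Ae e"
  shows "transpose_mat (assemble m n N idx Ae) = assemble m n N idx Ae"
proof -
  let ?P = "\<lambda>e. gather_mat m n (idx e)"
  let ?B = "\<lambda>e. transpose_mat (?P e) * Ae e * ?P e"
  have symB: "\<And>e. e < N \<Longrightarrow> transpose_mat (?B e) = ?B e"
  proof -
    fix e assume e: "e < N"
    have P: "?P e \<in> carrier_mat m n" by (rule gather_carrier)
    have PT: "transpose_mat (?P e) \<in> carrier_mat n m" using P by simp
    have PTA: "transpose_mat (?P e) * Ae e \<in> carrier_mat n m" using PT A[OF e] by simp
    have "transpose_mat (?B e) = transpose_mat (?P e) * transpose_mat (transpose_mat (?P e) * Ae e)"
      by (rule transpose_mult[OF PTA P])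
    also have "transpose_mat (transpose_mat (?P e) * Ae e) = transpose_mat (Ae e) * ?P e"
      using transpose_mult[OF PT A[OF e]] by simp
    also have "transpose_mat (?P e) * (transpose_mat (Ae e) * ?P e) = ?B e"
      using sym[OF e] assoc_mult_mat[OF PT A[OF e] P] by simp
    finally show "transpose_mat (?B e) = ?B e" .
  qed
  have Bc: "\<And>e. e < N \<Longrightarrow> ?B e \<in> carrier_mat n n" using A gather_carrier
    by (meson mult_carrier_mat transpose_carrier_mat)
  have ent: "\<And>e i j. e < N \<Longrightarrow> i < n \<Longrightarrow> j < n \<Longrightarrow> ?B e $$ (j,i) = ?B e $$ (i,j)"
  proof -
    fix e i j assume e: "e < N" and i: "i < n" and j: "j < n"
    have "?B e $$ (j,i) = transpose_mat (?B e) $$ (i,j)" using carrier_matD[OF Bc[OF e]] i j by simp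
    thus "?B e $$ (j,i) = ?B e $$ (i,j)" using symB[OF e] by simp
  qed
  show ?thesis unfolding assemble_def
    by (rule eq_matI) (auto intro!: sum.cong simp: ent)
qed

lemma sum8: "(\<Sum>s<(8::nat). f s) = f 0 + f 1 + f 2 + f 3 + f 4 + f 5 + f 6 + f 7"
  by (simp add: eval_nat_numeral)

lemma A2G4_entries: "s < 8 \<Longrightarrow> t < 8 \<Longrightarrow> kron A2 G4 $$ (s,t) =
   A2 $$ (s div 4, t div 4) * G4 $$ (s mod 4, t mod 4)"
  by (simp add: kron_def A2_def G4_def mat_of_rows_list_def)

lemma kron_carrier: "A \<in> carrier_mat a a' \<Longrightarrow> B \<in> carrier_mat b b' \<Longrightarrow> kron A B \<in> carrier_mat (a*b) (a'*b')"
  unfolding kron_def by auto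

lemma A2_carrier: "A2 \<in> carrier_mat 2 2"
proof -
  have l: "length [[1,-1],[-1,1::real]] = 2" by simp
  show ?thesis unfolding A2_def mat_of_rows_list_def l by (rule mat_carrier)
qed

lemma G4_carrier: "G4 \<in> carrier_mat 4 4"
proof -
  have l: "length [[4,2,1,2],[2,4,2,1],[1,2,4,2],[2,1,2,4::real]] = 4" by simp
  show ?thesis unfolding G4_def mat_of_rows_list_def l by (rule mat_carrier)
qed

lemma A2G4_carrier: "kron A2 G4 \<in> carrier_mat 8 8"
  using kron_carrier[OF A2_carrier G4_carrier] by simp

definition dG :: "real \<Rightarrow> real \<Rightarrow> real \<Rightarrow> real \<Rightarrow> real" where
  "dG a b c d = 4*a*a + 4*b*b + 4*c*c + 4*d*d + 4*a*b + 4*b*c + 4*c*d + 4*d*a + 2*a*c + 2*b*d"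

lemma q8:
  assumes z: "z \<in> carrier_vec 8"
  shows "z \<bullet> (kron A2 G4 *\<^sub>v z) = dG (z$0 - z$4) (z$1 - z$5) (z$2 - z$6) (z$3 - z$7)"
proof -
  have "z \<bullet> (kron A2 G4 *\<^sub>v z) = (\<Sum>i<8. \<Sum>j<8. z $ i * kron A2 G4 $$ (i,j) * z $ j)"
    by (rule qf_double[OF A2G4_carrier z])
  also have "\<dots> = (\<Sum>i<8. \<Sum>j<8. z $ i * (A2 $$ (i div 4, j div 4) * G4 $$ (i mod 4, j mod 4)) * z $ j)"
    by (intro sum.cong refl) (simp add: A2G4_entries)
  also have "\<dots> = dG (z$0 - z$4) (z$1 - z$5) (z$2 - z$6) (z$3 - z$7)"
    unfolding sum8 by (simp add: A2_def G4_def mat_of_rows_list_def dG_def algebra_simps)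
  finally show ?thesis .
qed

lemma dG_bounds: "0 \<le> dG a b c d" "dG a b c d \<le> 9 * (a^2 + b^2 + c^2 + d^2)"
proof -
  have e1: "4 * dG a b c d = 9 * (a+b+c+d)^2 + (a-b+c-d)^2 + 6 * ((a-c)^2 + (b-d)^2)"
    by (simp add: dG_def power2_eq_square algebra_simps)
  have "0 \<le> 9 * (a+b+c+d)^2 + (a-b+c-d)^2 + 6 * ((a-c)^2 + (b-d)^2)"
    by (intro add_nonneg_nonneg mult_nonneg_nonneg) auto
  thus "0 \<le> dG a b c d" using e1 by linarith
  have e2: "9 * (a^2 + b^2 + c^2 + d^2) - dG a b c d = 2 * (a-b+c-d)^2 + 3 * ((a-c)^2 + (b-d)^2)"
    by (simp add: dG_def power2_eq_square algebra_simps)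
  have "0 \<le> 2 * (a-b+c-d)^2 + 3 * ((a-c)^2 + (b-d)^2)"
    by (intro add_nonneg_nonneg mult_nonneg_nonneg) auto
  thus "dG a b c d \<le> 9 * (a^2 + b^2 + c^2 + d^2)" using e2 by linarith
qed

lemma sq_diff_le: "(x - y)^2 \<le> 2 * (x^2 + y^2)" for x y :: real
proof -
  have "2 * (x^2 + y^2) - (x - y)^2 = (x + y)^2" by (simp add: power2_eq_square algebra_simps)
  moreover have "(x + y)^2 \<ge> 0" by simp
  ultimately show ?thesis by linarith
qed

lemma q8_bounds:
  assumes z: "z \<in> carrier_vec 8"
  shows "0 \<le> z \<bullet> (kron A2 G4 *\<^sub>v z)" "z \<bullet> (kron A2 G4 *\<^sub>v z) \<le> 18 * (z \<bullet> z)"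
proof -
  show "0 \<le> z \<bullet> (kron A2 G4 *\<^sub>v z)" unfolding q8[OF z] by (rule dG_bounds)
  have zz: "z \<bullet> z = z$0^2 + z$1^2 + z$2^2 + z$3^2 + z$4^2 + z$5^2 + z$6^2 + z$7^2"
    using z by (simp add: scalar_prod_def atLeast0LessThan sum8 power2_eq_square)
  have "z \<bullet> (kron A2 G4 *\<^sub>v z) \<le> 9 * ((z$0 - z$4)^2 + (z$1 - z$5)^2 + (z$2 - z$6)^2 + (z$3 - z$7)^2)"
    unfolding q8[OF z] by (rule dG_bounds)
  also have "\<dots> \<le> 9 * (2 * (z$0^2 + z$4^2) + 2 * (z$1^2 + z$5^2) + 2 * (z$2^2 + z$6^2) + 2 * (z$3^2 + z$7^2))"
    using sq_diff_le[of "z$0" "z$4"] sq_diff_le[of "z$1" "z$5"] sq_diff_le[of "z$2" "z$6"] sq_diff_le[of "z$3" "z$7"]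
    by (intro mult_left_mono add_mono) simp_all
  also have "\<dots> = 18 * (z \<bullet> z)" unfolding zz by simp
  finally show "z \<bullet> (kron A2 G4 *\<^sub>v z) \<le> 18 * (z \<bullet> z)" .
qed

lemma block_sum:
  fixes B q :: nat and g :: "nat \<Rightarrow> 'a::comm_monoid_add"
  shows "(\<Sum>k<B*q. g k) = (\<Sum>b<B. \<Sum>j<q. g (j + b*q))"
proof -
  have "(\<Sum>k<B*q. g k) = (\<Sum>b<B. sum g {b*q..<b*q+q})" using sum.nat_group[of g q B] by simp
  also have "\<dots> = (\<Sum>b<B. \<Sum>j<q. g (j + b*q))"
  proof (rule sum.cong)
    fix b
    have "sum g {0 + b*q..<q + b*q} = sum (\<lambda>i. g (i + b*q)) {0..<q}" by (rule sum.shift_bounds_nat_ivl)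
    thus "sum g {b*q..<b*q+q} = (\<Sum>j<q. g (j + b*q))" by (simp add: atLeast0LessThan add.commute)
  qed simp
  finally show ?thesis .
qed

lemma kron_block_qf:
  fixes F :: "real mat"
  assumes F: "F \<in> carrier_mat q q" and y: "y \<in> carrier_vec (B*q)"
  shows "y \<bullet> (kron (1\<^sub>m B) F *\<^sub>v y) = (\<Sum>b<B. vec q (\<lambda>j. y $ (j + b*q)) \<bullet> (F *\<^sub>v vec q (\<lambda>j. y $ (j + b*q))))"
proof -
  let ?E = "kron (1\<^sub>m B) F"
  have E: "?E \<in> carrier_mat (B*q) (B*q)" using kron_carrier[OF one_carrier_mat F] .
  have ent: "\<And>b b' s t. b < B \<Longrightarrow> b' < B \<Longrightarrow> s < q \<Longrightarrow> t < q \<Longrightarrow>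
      ?E $$ (s + b*q, t + b'*q) = (if b = b' then F $$ (s,t) else 0)"
  proof -
    fix b b' s t assume b: "b < B" and b': "b' < B" and s: "s < q" and t: "t < q"
    have q: "q > 0" using s by simp
    have lt: "\<And>b s. b < B \<Longrightarrow> s < q \<Longrightarrow> s + b*q < B*q"
    proof -
      fix b s assume b: "b < B" and s: "s < q"
      have "s + b*q < Suc b * q" using s by simp
      also have "Suc b * q \<le> B * q" using b by (intro mult_le_mono1) simp
      finally show "s + b*q < B*q" .
    qed
    have d1: "(s + b*q) div q = b" "(s + b*q) mod q = s" using s q by auto
    have d2: "(t + b'*q) div q = b'" "(t + b'*q) mod q = t" using t q by auto
    have "?E $$ (s + b*q, t + b'*q) = 1\<^sub>m B $$ (b, b') * F $$ (s, t)"
      unfolding kron_def using lt[OF b s] lt[OF b' t] F d1 d2 by simp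
    thus "?E $$ (s + b*q, t + b'*q) = (if b = b' then F $$ (s,t) else 0)" using b b' by simp
  qed
  have "y \<bullet> (?E *\<^sub>v y) = (\<Sum>i<B*q. \<Sum>j<B*q. y $ i * ?E $$ (i,j) * y $ j)"
    by (rule qf_double[OF E y])
  also have "\<dots> = (\<Sum>b<B. \<Sum>s<q. \<Sum>b'<B. \<Sum>t<q. y $ (s + b*q) * ?E $$ (s + b*q, t + b'*q) * y $ (t + b'*q))"
    unfolding block_sum ..
  also have "\<dots> = (\<Sum>b<B. \<Sum>s<q. \<Sum>b'<B. if b' = b then (\<Sum>t<q. y $ (s + b*q) * F $$ (s,t) * y $ (t + b*q)) else 0)"
    by (intro sum.cong refl) (auto simp: ent)
  also have "\<dots> = (\<Sum>b<B. \<Sum>s<q. \<Sum>t<q. y $ (s + b*q) * F $$ (s,t) * y $ (t + b*q))"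
    by (simp add: sum.delta)
  also have "\<dots> = (\<Sum>b<B. vec q (\<lambda>j. y $ (j + b*q)) \<bullet> (F *\<^sub>v vec q (\<lambda>j. y $ (j + b*q))))"
  proof (rule sum.cong)
    fix b assume "b \<in> {..<B}"
    show "(\<Sum>s<q. \<Sum>t<q. y $ (s + b*q) * F $$ (s,t) * y $ (t + b*q)) =
        vec q (\<lambda>j. y $ (j + b*q)) \<bullet> (F *\<^sub>v vec q (\<lambda>j. y $ (j + b*q)))"
      unfolding qf_double[OF F vec_carrier] by simp
  qed simp
  finally show ?thesis .
qed

lemma kron_sym:
  fixes A F :: "real mat"
  assumes A: "A \<in> carrier_mat a a" and F: "F \<in> carrier_mat q q"
    and sA: "transpose_mat A = A" and sF: "transpose_mat F = F"
  shows "transpose_mat (kron A F) = kron A F"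
proof -
  have KC: "kron A F \<in> carrier_mat (a*q) (a*q)" by (rule kron_carrier[OF A F])
  have eA: "\<And>i j. i < a \<Longrightarrow> j < a \<Longrightarrow> A $$ (j,i) = A $$ (i,j)"
    using sA A by (metis carrier_matD index_transpose_mat(1))
  have eF: "\<And>i j. i < q \<Longrightarrow> j < q \<Longrightarrow> F $$ (j,i) = F $$ (i,j)"
    using sF F by (metis carrier_matD index_transpose_mat(1))
  show ?thesis
  proof (rule eq_matI)
    fix i j assume i: "i < dim_row (kron A F)" and j: "j < dim_col (kron A F)"
    hence i: "i < a*q" and j: "j < a*q" using KC by auto
    have q: "q > 0" using i by (cases q) auto
    have di: "i div q < a" "j div q < a" using i j less_mult_imp_div_less by auto
    have mi: "i mod q < q" "j mod q < q" using q by auto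
    have "transpose_mat (kron A F) $$ (i,j) = kron A F $$ (j,i)" using i j KC by simp
    also have "\<dots> = A $$ (j div q, i div q) * F $$ (j mod q, i mod q)"
      unfolding kron_def using i j A F by simp
    also have "\<dots> = A $$ (i div q, j div q) * F $$ (i mod q, j mod q)"
      using eA[OF di] eF[OF mi] by simp
    also have "\<dots> = kron A F $$ (i,j)" unfolding kron_def using i j A F by simp
    finally show "transpose_mat (kron A F) $$ (i,j) = kron A F $$ (i,j)" .
  qed (use KC in auto)
qed

lemma lt2: "i < (2::nat) \<Longrightarrow> i = 0 \<or> i = 1" by auto
lemma lt4: "i < (4::nat) \<Longrightarrow> i = 0 \<or> i = 1 \<or> i = 2 \<or> i = 3" by auto

lemma A2_sym: "transpose_mat A2 = A2"
proof (rule eq_matI)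
  fix i j assume "i < dim_row A2" "j < dim_col A2"
  hence i: "i < 2" and j: "j < 2" using A2_carrier by auto
  show "transpose_mat A2 $$ (i,j) = A2 $$ (i,j)"
    using lt2[OF i] lt2[OF j] A2_carrier by (auto simp: A2_def mat_of_rows_list_def)
qed (use A2_carrier in auto)

lemma G4_sym: "transpose_mat G4 = G4"
proof (rule eq_matI)
  fix i j assume "i < dim_row G4" "j < dim_col G4"
  hence i: "i < 4" and j: "j < 4" using G4_carrier by auto
  show "transpose_mat G4 $$ (i,j) = G4 $$ (i,j)"
    using lt4[OF i] lt4[OF j] G4_carrier by (auto simp: G4_def mat_of_rows_list_def)
qed (use G4_carrier in auto)

lemma smult_sym: "transpose_mat (c \<cdot>\<^sub>m (A :: real mat)) = c \<cdot>\<^sub>m transpose_mat A"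
  by (rule eq_matI) auto

lemma lumped_carrier: "lumped_mass me \<in> carrier_mat 24 24"
  unfolding lumped_mass_def using kron_carrier[OF one_carrier_mat[of 3] smult_carrier_mat[OF one_carrier_mat[of 8]]]
  by simp

lemma corr_carrier: "mass_correction b me \<in> carrier_mat 24 24"
  unfolding mass_correction_def using kron_carrier[OF one_carrier_mat[of 3] smult_carrier_mat[OF A2G4_carrier]]
  by simp

lemma lumped_sym: "transpose_mat (lumped_mass me) = lumped_mass me"
  unfolding lumped_mass_def
  by (rule kron_sym[OF one_carrier_mat smult_carrier_mat[OF one_carrier_mat]]) (auto simp: smult_sym)

lemma corr_sym: "transpose_mat (mass_correction b me) = mass_correction b me"
  unfolding mass_correction_def
  by (rule kron_sym[OF one_carrier_mat smult_carrier_mat[OF A2G4_carrier]])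
    (auto simp: smult_sym kron_sym[OF A2_carrier G4_carrier A2_sym G4_sym])

lemma block_dot:
  assumes y: "y \<in> carrier_vec (B*q)"
  shows "y \<bullet> y = (\<Sum>b<B. vec q (\<lambda>j. y $ (j + b*q)) \<bullet> vec q (\<lambda>j. y $ (j + b*q)))"
proof -
  have "y \<bullet> y = (\<Sum>k<B*q. y $ k * y $ k)" using y by (simp add: scalar_prod_def atLeast0LessThan)
  also have "\<dots> = (\<Sum>b<B. \<Sum>j<q. y $ (j + b*q) * y $ (j + b*q))" by (rule block_sum)
  also have "\<dots> = (\<Sum>b<B. vec q (\<lambda>j. y $ (j + b*q)) \<bullet> vec q (\<lambda>j. y $ (j + b*q)))"
    by (simp add: scalar_prod_def atLeast0LessThan)
  finally show ?thesis .
qed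

lemma dot_self_nonneg: "(y :: real vec) \<bullet> y \<ge> 0"
  by (simp add: scalar_prod_def sum_nonneg)

lemma elem_bounds:
  fixes y :: "real vec"
  assumes y: "y \<in> carrier_vec 24" and me: "me > 0" and b: "\<beta> \<ge> 0"
  shows "y \<bullet> (lumped_mass me *\<^sub>v y) = me / 8 * (y \<bullet> y)"
    "0 \<le> y \<bullet> (mass_correction \<beta> me *\<^sub>v y)"
    "y \<bullet> (mass_correction \<beta> me *\<^sub>v y) \<le> 9 * \<beta> / 2 * (me / 8 * (y \<bullet> y))"
proof -
  have y': "y \<in> carrier_vec (3*8)" using y by simp
  let ?yb = "\<lambda>b. vec 8 (\<lambda>j. y $ (j + b*8))"
  have ybc: "\<And>b. ?yb b \<in> carrier_vec 8" by simp
  have "y \<bullet> (lumped_mass me *\<^sub>v y) = (\<Sum>b<3. ?yb b \<bullet> (((me/8) \<cdot>\<^sub>m 1\<^sub>m 8) *\<^sub>v ?yb b))"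
    unfolding lumped_mass_def by (rule kron_block_qf[OF smult_carrier_mat[OF one_carrier_mat] y'])
  also have "\<dots> = (\<Sum>b<3. me/8 * (?yb b \<bullet> ?yb b))"
    by (intro sum.cong refl) (simp add: smult_mat_vec[OF one_carrier_mat ybc] scalar_prod_smult_distrib[OF ybc])
  also have "\<dots> = me / 8 * (y \<bullet> y)" unfolding block_dot[OF y'] by (simp add: sum_distrib_left)
  finally show "y \<bullet> (lumped_mass me *\<^sub>v y) = me / 8 * (y \<bullet> y)" .
  define c where "c = \<beta> * me / 32"
  have c: "c \<ge> 0" using b me by (simp add: c_def)
  have eq: "y \<bullet> (mass_correction \<beta> me *\<^sub>v y) = (\<Sum>b<3. c * (?yb b \<bullet> (kron A2 G4 *\<^sub>v ?yb b)))"
  proof -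
    have "y \<bullet> (mass_correction \<beta> me *\<^sub>v y) = (\<Sum>b<3. ?yb b \<bullet> ((c \<cdot>\<^sub>m kron A2 G4) *\<^sub>v ?yb b))"
      unfolding mass_correction_def c_def by (rule kron_block_qf[OF smult_carrier_mat[OF A2G4_carrier] y'])
    also have "\<dots> = (\<Sum>b<3. c * (?yb b \<bullet> (kron A2 G4 *\<^sub>v ?yb b)))"
      by (intro sum.cong refl) (simp add: smult_mat_vec[OF A2G4_carrier ybc] scalar_prod_smult_right carrier_matD[OF A2G4_carrier])
    finally show ?thesis .
  qed
  show "0 \<le> y \<bullet> (mass_correction \<beta> me *\<^sub>v y)"
    unfolding eq by (intro sum_nonneg mult_nonneg_nonneg c q8_bounds(1) ybc)
  have "y \<bullet> (mass_correction \<beta> me *\<^sub>v y) \<le> (\<Sum>b<3. c * (18 * (?yb b \<bullet> ?yb b)))"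
    unfolding eq by (intro sum_mono mult_left_mono c q8_bounds(2) ybc)
  also have "\<dots> = c * 18 * (y \<bullet> y)" unfolding block_dot[OF y'] by (simp add: sum_distrib_left mult.assoc)
  also have "\<dots> = 9 * \<beta> / 2 * (me / 8 * (y \<bullet> y))" by (simp add: c_def)
  finally show "y \<bullet> (mass_correction \<beta> me *\<^sub>v y) \<le> 9 * \<beta> / 2 * (me / 8 * (y \<bullet> y))" .
qed

lemma get_eigs:
  fixes K M :: "real mat"
  assumes K: "K \<in> carrier_mat n n" and M: "M \<in> carrier_mat n n"
    and symK: "transpose_mat K = K" and symM: "transpose_mat M = M"
    and pd: "\<forall>x\<in>carrier_vec n. x \<noteq> 0\<^sub>v n \<longrightarrow> x \<bullet> (M *\<^sub>v x) > 0"
  shows "\<exists>ps. eigsys n K M ps \<and> sorted (map fst ps) \<and> gen_eigs K M = map fst ps"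
proof -
  obtain ps0 where "eigsys n K M ps0" using spectral[OF K M symK symM pd] by blast
  then obtain ps where ps: "eigsys n K M ps" "sorted (map fst ps)" using eigsys_sorted by blast
  have "gen_eigs K M = map fst ps" by (rule gen_eigs_eq[OF K M pd_det[OF M pd] ps])
  with ps show ?thesis by blast
qed

lemma eig_pos:
  fixes K M :: "real mat"
  assumes K: "K \<in> carrier_mat n n" and M: "M \<in> carrier_mat n n" and es: "eigsys n K M ps"
    and pdK: "\<forall>x\<in>carrier_vec n. x \<noteq> 0\<^sub>v n \<longrightarrow> x \<bullet> (K *\<^sub>v x) > 0"
    and j: "j < n"
  shows "fst (ps ! j) > 0"
proof -
  let ?w = "snd (ps ! j)"
  have w: "?w \<in> carrier_vec n" and ev: "K *\<^sub>v ?w = fst (ps ! j) \<cdot>\<^sub>v (M *\<^sub>v ?w)"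
    and one: "?w \<bullet> (M *\<^sub>v ?w) = 1" using es j by (auto simp: eigsys_def)
  have "?w \<noteq> 0\<^sub>v n"
  proof
    assume "?w = 0\<^sub>v n"
    hence "?w \<bullet> (M *\<^sub>v ?w) = 0" using M by simp
    with one show False by simp
  qed
  hence "?w \<bullet> (K *\<^sub>v ?w) > 0" using pdK w by blast
  moreover have "?w \<bullet> (K *\<^sub>v ?w) = fst (ps ! j)"
    unfolding ev using one w M by (simp add: scalar_prod_smult_distrib[of _ n])
  ultimately show ?thesis by simp
qed

lemma self_dot_pos:
  fixes x :: "real vec"
  assumes x: "x \<in> carrier_vec n" and x0: "x \<noteq> 0\<^sub>v n"
  shows "x \<bullet> x > 0"
proof -
  obtain k where k: "k < n" "x $ k \<noteq> 0"
  proof (rule ccontr)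
    assume "\<not> thesis"
    hence "\<forall>k<n. x $ k = 0" using that by blast
    hence "x = 0\<^sub>v n" using x by (intro eq_vecI) auto
    with x0 show False by simp
  qed
  have "x \<bullet> x = (\<Sum>i<n. x $ i * x $ i)" using x by (simp add: scalar_prod_def atLeast0LessThan)
  also have "\<dots> > 0" by (rule sum_pos2[of _ k]) (use k in \<open>auto simp: zero_less_mult_iff\<close>)
  finally show ?thesis .
qed

lemma id_props:
  shows "1\<^sub>m n \<in> carrier_mat n n" "transpose_mat (1\<^sub>m n :: real mat) = 1\<^sub>m n"
    "\<forall>x\<in>carrier_vec n. x \<noteq> 0\<^sub>v n \<longrightarrow> x \<bullet> ((1\<^sub>m n :: real mat) *\<^sub>v x) > 0"
  by (auto intro: self_dot_pos)

theorem mainTheorem10: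
  fixes n N :: nat and idx :: "nat \<Rightarrow> nat \<Rightarrow> nat" and Ke :: "nat \<Rightarrow> real mat"
    and me :: "nat \<Rightarrow> real" and \<beta> :: real
  assumes n_pos: "0 < n"
    and idx: "\<forall>e<N. inj_on (idx e) {..<24} \<and> idx e ` {..<24} \<subseteq> {..<n}"
    and cover: "\<forall>g<n. \<exists>e<N. g \<in> idx e ` {..<24}"
    and Ke: "\<forall>e<N. Ke e \<in> carrier_mat 24 24 \<and> psd_mat (Ke e)"
    and K_spd: "spd_mat (assemble 24 n N idx Ke)"
    and beta: "\<beta> \<ge> 0"
    and mass: "\<forall>e<N. me e > 0"
  defines "K \<equiv> assemble 24 n N idx Ke"
    and "M \<equiv> assemble 24 n N idx (\<lambda>e. lumped_mass (me e))"
    and "Mbar \<equiv> assemble 24 n N idx (\<lambda>e. lumped_mass (me e) + mass_correction \<beta> (me e))"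
  shows "(\<forall>i<n. 1 \<le> sqrt (gen_eigs K M ! i) / sqrt (gen_eigs K Mbar ! i) \<and>
                 sqrt (gen_eigs K M ! i) / sqrt (gen_eigs K Mbar ! i) \<le> sqrt (1 + 9/2 * \<beta>))
         \<and> cond_num Mbar / cond_num M \<le> 1 + 9/2 * \<beta>"
proof -
  define c where "c = 1 + 9/2 * \<beta>"
  have c1: "c \<ge> 1" using beta by (simp add: c_def)
  have idxlt: "\<And>e k. e < N \<Longrightarrow> k < 24 \<Longrightarrow> idx e k < n" using idx by blast
  define yv where "yv = (\<lambda>e (x :: real vec). vec 24 (\<lambda>k. x $ idx e k) :: real vec)"
  have yc: "\<And>e x. yv e x \<in> carrier_vec 24" by (simp add: yv_def)
  have Kc: "K \<in> carrier_mat n n" unfolding K_def by (rule assemble_carrier)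
  have Mc: "M \<in> carrier_mat n n" unfolding M_def by (rule assemble_carrier)
  have Mbc: "Mbar \<in> carrier_mat n n" unfolding Mbar_def by (rule assemble_carrier)
  have symK: "transpose_mat K = K" using K_spd unfolding spd_mat_def K_def by blast
  have pdK: "\<forall>x\<in>carrier_vec n. x \<noteq> 0\<^sub>v n \<longrightarrow> x \<bullet> (K *\<^sub>v x) > 0"
    using K_spd Kc unfolding spd_mat_def K_def by auto
  have psdK: "\<And>x. x \<in> carrier_vec n \<Longrightarrow> x \<bullet> (K *\<^sub>v x) \<ge> 0"
  proof -
    fix x :: "real vec" assume x: "x \<in> carrier_vec n"
    show "x \<bullet> (K *\<^sub>v x) \<ge> 0"
    proof (cases "x = 0\<^sub>v n")
      case True thus ?thesis using Kc by simp
    next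
      case False thus ?thesis using pdK x by (meson less_imp_le)
    qed
  qed
  have EMc: "\<And>e. lumped_mass (me e) + mass_correction \<beta> (me e) \<in> carrier_mat 24 24"
    using lumped_carrier corr_carrier by (meson add_carrier_mat)
  have symM: "transpose_mat M = M"
    unfolding M_def by (rule assemble_sym) (auto simp: lumped_carrier lumped_sym)
  have symMb: "transpose_mat Mbar = Mbar"
    unfolding Mbar_def
  proof (rule assemble_sym)
    fix e
    show "lumped_mass (me e) + mass_correction \<beta> (me e) \<in> carrier_mat 24 24" by (rule EMc)
    show "transpose_mat (lumped_mass (me e) + mass_correction \<beta> (me e)) = lumped_mass (me e) + mass_correction \<beta> (me e)"
      using transpose_add[OF lumped_carrier corr_carrier] lumped_sym corr_sym by simp
  qed
  have qfM: "\<And>x. x \<in> carrier_vec n \<Longrightarrow> x \<bullet> (M *\<^sub>v x) = (\<Sum>e<N. me e / 8 * (yv e x \<bullet> yv e x))"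
  proof -
    fix x :: "real vec" assume x: "x \<in> carrier_vec n"
    have "x \<bullet> (M *\<^sub>v x) = (\<Sum>e<N. yv e x \<bullet> (lumped_mass (me e) *\<^sub>v yv e x))"
      unfolding M_def yv_def by (rule assemble_qf[OF lumped_carrier idxlt x])
    also have "\<dots> = (\<Sum>e<N. me e / 8 * (yv e x \<bullet> yv e x))"
      by (intro sum.cong refl) (use elem_bounds(1)[OF yc] mass beta in auto)
    finally show "x \<bullet> (M *\<^sub>v x) = (\<Sum>e<N. me e / 8 * (yv e x \<bullet> yv e x))" .
  qed
  have qfMb: "\<And>x. x \<in> carrier_vec n \<Longrightarrow> x \<bullet> (Mbar *\<^sub>v x) =
      (\<Sum>e<N. me e / 8 * (yv e x \<bullet> yv e x) + yv e x \<bullet> (mass_correction \<beta> (me e) *\<^sub>v yv e x))"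
  proof -
    fix x :: "real vec" assume x: "x \<in> carrier_vec n"
    have "x \<bullet> (Mbar *\<^sub>v x) = (\<Sum>e<N. yv e x \<bullet> ((lumped_mass (me e) + mass_correction \<beta> (me e)) *\<^sub>v yv e x))"
      unfolding Mbar_def yv_def by (rule assemble_qf[OF EMc idxlt x])
    also have "\<dots> = (\<Sum>e<N. me e / 8 * (yv e x \<bullet> yv e x) + yv e x \<bullet> (mass_correction \<beta> (me e) *\<^sub>v yv e x))"
    proof (rule sum.cong)
      fix e assume "e \<in> {..<N}"
      hence e: "e < N" by simp
      have a: "(lumped_mass (me e) + mass_correction \<beta> (me e)) *\<^sub>v yv e x =
          lumped_mass (me e) *\<^sub>v yv e x + mass_correction \<beta> (me e) *\<^sub>v yv e x"
        by (rule add_mult_distrib_mat_vec[OF lumped_carrier corr_carrier yc])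
      have b: "yv e x \<bullet> (lumped_mass (me e) *\<^sub>v yv e x + mass_correction \<beta> (me e) *\<^sub>v yv e x) =
          yv e x \<bullet> (lumped_mass (me e) *\<^sub>v yv e x) + yv e x \<bullet> (mass_correction \<beta> (me e) *\<^sub>v yv e x)"
        by (rule scalar_prod_add_distrib[OF yc mult_mat_vec_carrier[OF lumped_carrier yc] mult_mat_vec_carrier[OF corr_carrier yc]])
      show "yv e x \<bullet> ((lumped_mass (me e) + mass_correction \<beta> (me e)) *\<^sub>v yv e x) =
          me e / 8 * (yv e x \<bullet> yv e x) + yv e x \<bullet> (mass_correction \<beta> (me e) *\<^sub>v yv e x)"
        unfolding a b using elem_bounds(1)[OF yc mass[rule_format, OF e] beta] by simp
    qed simp
    finally show "x \<bullet> (Mbar *\<^sub>v x) =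
      (\<Sum>e<N. me e / 8 * (yv e x \<bullet> yv e x) + yv e x \<bullet> (mass_correction \<beta> (me e) *\<^sub>v yv e x))" .
  qed
  have le1: "\<And>x. x \<in> carrier_vec n \<Longrightarrow> x \<bullet> (M *\<^sub>v x) \<le> x \<bullet> (Mbar *\<^sub>v x)"
    unfolding qfM qfMb
    by (intro sum_mono) (use elem_bounds(2)[OF yc] mass beta in auto)
  have le2: "\<And>x. x \<in> carrier_vec n \<Longrightarrow> x \<bullet> (Mbar *\<^sub>v x) \<le> c * (x \<bullet> (M *\<^sub>v x))"
  proof -
    fix x :: "real vec" assume x: "x \<in> carrier_vec n"
    have "x \<bullet> (Mbar *\<^sub>v x) \<le> (\<Sum>e<N. c * (me e / 8 * (yv e x \<bullet> yv e x)))"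
      unfolding qfMb[OF x]
    proof (rule sum_mono)
      fix e assume "e \<in> {..<N}"
      hence e: "e < N" by simp
      show "me e / 8 * (yv e x \<bullet> yv e x) + yv e x \<bullet> (mass_correction \<beta> (me e) *\<^sub>v yv e x)
          \<le> c * (me e / 8 * (yv e x \<bullet> yv e x))"
        using elem_bounds(3)[OF yc mass[rule_format, OF e] beta, of e x]
        by (simp add: c_def algebra_simps)
    qed
    also have "\<dots> = c * (x \<bullet> (M *\<^sub>v x))" unfolding qfM[OF x] by (simp add: sum_distrib_left)
    finally show "x \<bullet> (Mbar *\<^sub>v x) \<le> c * (x \<bullet> (M *\<^sub>v x))" .
  qed
  have pdM: "\<forall>x\<in>carrier_vec n. x \<noteq> 0\<^sub>v n \<longrightarrow> x \<bullet> (M *\<^sub>v x) > 0"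
  proof (intro ballI impI)
    fix x :: "real vec" assume x: "x \<in> carrier_vec n" and x0: "x \<noteq> 0\<^sub>v n"
    obtain g where g: "g < n" "x $ g \<noteq> 0"
    proof (rule ccontr)
      assume "\<not> thesis"
      hence "\<forall>k<n. x $ k = 0" using that by blast
      hence "x = 0\<^sub>v n" using x by (intro eq_vecI) auto
      with x0 show False by simp
    qed
    obtain e k where ek: "e < N" "k < 24" "idx e k = g" using cover g(1) by blast
    have pos: "yv e x \<bullet> yv e x > 0"
    proof -
      have "yv e x \<bullet> yv e x = (\<Sum>i<24. yv e x $ i * yv e x $ i)" by (simp add: yv_def scalar_prod_def atLeast0LessThan)
      also have "\<dots> > 0"
        by (rule sum_pos2[of _ k]) (use ek g in \<open>auto simp: yv_def zero_less_mult_iff\<close>)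
      finally show ?thesis .
    qed
    have "(\<Sum>e<N. me e / 8 * (yv e x \<bullet> yv e x)) > 0"
      by (rule sum_pos2[of _ e]) (use ek pos mass dot_self_nonneg in auto)
    thus "x \<bullet> (M *\<^sub>v x) > 0" using qfM[OF x] by simp
  qed
  have pdMb: "\<forall>x\<in>carrier_vec n. x \<noteq> 0\<^sub>v n \<longrightarrow> x \<bullet> (Mbar *\<^sub>v x) > 0"
    using pdM le1 by (meson less_le_trans)
  note I = id_props[of n]
  obtain p1 where p1: "eigsys n K M p1" "sorted (map fst p1)" "gen_eigs K M = map fst p1"
    using get_eigs[OF Kc Mc symK symM pdM] by blast
  obtain p2 where p2: "eigsys n K Mbar p2" "sorted (map fst p2)" "gen_eigs K Mbar = map fst p2"
    using get_eigs[OF Kc Mbc symK symMb pdMb] by blast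
  obtain p3 where p3: "eigsys n M (1\<^sub>m n) p3" "sorted (map fst p3)" "gen_eigs M (1\<^sub>m n) = map fst p3"
    using get_eigs[OF Mc I(1) symM I(2) I(3)] by blast
  obtain p4 where p4: "eigsys n Mbar (1\<^sub>m n) p4" "sorted (map fst p4)" "gen_eigs Mbar (1\<^sub>m n) = map fst p4"
    using get_eigs[OF Mbc I(1) symMb I(2) I(3)] by blast
  have len: "length p1 = n" "length p2 = n" "length p3 = n" "length p4 = n"
    using p1 p2 p3 p4 by (auto simp: eigsys_def)
  have pos1: "\<And>j. j < n \<Longrightarrow> fst (p1 ! j) > 0" using eig_pos[OF Kc Mc p1(1) pdK] .
  have pos2: "\<And>j. j < n \<Longrightarrow> fst (p2 ! j) > 0" using eig_pos[OF Kc Mbc p2(1) pdK] .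
  have pos3: "\<And>j. j < n \<Longrightarrow> fst (p3 ! j) > 0" using eig_pos[OF Mc I(1) p3(1) pdM] .
  have pos4: "\<And>j. j < n \<Longrightarrow> fst (p4 ! j) > 0" using eig_pos[OF Mbc I(1) p4(1) pdMb] .
  have cmp1: "\<And>i. i < n \<Longrightarrow> fst (p2 ! i) \<le> 1 * fst (p1 ! i)"
  proof -
    fix i assume i: "i < n"
    show "fst (p2 ! i) \<le> 1 * fst (p1 ! i)"
    proof (rule compare_eigs[OF Kc Mbc Kc Mc p2(1) p1(1) p2(2) p1(2) pdMb pdM _ _ i])
      show "(0::real) \<le> 1" by simp
      show "\<forall>x\<in>carrier_vec n. x \<noteq> 0\<^sub>v n \<longrightarrow>
          x \<bullet> (K *\<^sub>v x) * (x \<bullet> (M *\<^sub>v x)) \<le> 1 * (x \<bullet> (K *\<^sub>v x)) * (x \<bullet> (Mbar *\<^sub>v x))"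
        using psdK le1 by (simp add: mult_left_mono)
    qed
  qed
  have cmp2: "\<And>i. i < n \<Longrightarrow> fst (p1 ! i) \<le> c * fst (p2 ! i)"
  proof -
    fix i assume i: "i < n"
    show "fst (p1 ! i) \<le> c * fst (p2 ! i)"
    proof (rule compare_eigs[OF Kc Mc Kc Mbc p1(1) p2(1) p1(2) p2(2) pdM pdMb _ _ i])
      show "0 \<le> c" using c1 by simp
      show "\<forall>x\<in>carrier_vec n. x \<noteq> 0\<^sub>v n \<longrightarrow>
          x \<bullet> (K *\<^sub>v x) * (x \<bullet> (Mbar *\<^sub>v x)) \<le> c * (x \<bullet> (K *\<^sub>v x)) * (x \<bullet> (M *\<^sub>v x))"
      proof (intro ballI impI)
        fix x :: "real vec" assume x: "x \<in> carrier_vec n"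
        have "x \<bullet> (K *\<^sub>v x) * (x \<bullet> (Mbar *\<^sub>v x)) \<le> x \<bullet> (K *\<^sub>v x) * (c * (x \<bullet> (M *\<^sub>v x)))"
          by (rule mult_left_mono[OF le2[OF x] psdK[OF x]])
        thus "x \<bullet> (K *\<^sub>v x) * (x \<bullet> (Mbar *\<^sub>v x)) \<le> c * (x \<bullet> (K *\<^sub>v x)) * (x \<bullet> (M *\<^sub>v x))"
          by (simp add: algebra_simps)
      qed
    qed
  qed
  have cmp3: "fst (p3 ! 0) \<le> 1 * fst (p4 ! 0)"
  proof (rule compare_eigs[OF Mc I(1) Mbc I(1) p3(1) p4(1) p3(2) p4(2) I(3) I(3) _ _ n_pos])
    show "(0::real) \<le> 1" by simp
    show "\<forall>x\<in>carrier_vec n. x \<noteq> 0\<^sub>v n \<longrightarrow>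
        x \<bullet> (M *\<^sub>v x) * (x \<bullet> (1\<^sub>m n *\<^sub>v x)) \<le> 1 * (x \<bullet> (Mbar *\<^sub>v x)) * (x \<bullet> (1\<^sub>m n *\<^sub>v x))"
      using le1 by (auto intro!: mult_right_mono simp: dot_self_nonneg)
  qed
  have nl: "n - 1 < n" using n_pos by simp
  have cmp4: "fst (p4 ! (n-1)) \<le> c * fst (p3 ! (n-1))"
  proof (rule compare_eigs[OF Mbc I(1) Mc I(1) p4(1) p3(1) p4(2) p3(2) I(3) I(3) _ _ nl])
    show "0 \<le> c" using c1 by simp
    show "\<forall>x\<in>carrier_vec n. x \<noteq> 0\<^sub>v n \<longrightarrow>
        x \<bullet> (Mbar *\<^sub>v x) * (x \<bullet> (1\<^sub>m n *\<^sub>v x)) \<le> c * (x \<bullet> (M *\<^sub>v x)) * (x \<bullet> (1\<^sub>m n *\<^sub>v x))"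
      using le2 by (auto intro!: mult_right_mono simp: dot_self_nonneg)
  qed
  have part1: "\<forall>i<n. 1 \<le> sqrt (gen_eigs K M ! i) / sqrt (gen_eigs K Mbar ! i) \<and>
                 sqrt (gen_eigs K M ! i) / sqrt (gen_eigs K Mbar ! i) \<le> sqrt (1 + 9/2 * \<beta>)"
  proof (intro allI impI)
    fix i assume i: "i < n"
    define a where "a = fst (p1 ! i)"
    define b where "b = fst (p2 ! i)"
    have ga: "gen_eigs K M ! i = a" using p1(3) len i by (simp add: a_def)
    have gb: "gen_eigs K Mbar ! i = b" using p2(3) len i by (simp add: b_def)
    have b0: "b > 0" using pos2[OF i] by (simp add: b_def)
    have ba: "b \<le> a" using cmp1[OF i] by (simp add: a_def b_def)
    have ab: "a \<le> c * b" using cmp2[OF i] by (simp add: a_def b_def)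
    have sb: "sqrt b > 0" using b0 by simp
    have "sqrt b \<le> sqrt a" using ba by simp
    hence r1: "1 \<le> sqrt a / sqrt b" using sb by simp
    have "sqrt a \<le> sqrt (c * b)" using ab by simp
    also have "\<dots> = sqrt c * sqrt b" by (simp add: real_sqrt_mult)
    finally have r2: "sqrt a / sqrt b \<le> sqrt c" using sb by (simp add: divide_le_eq)
    show "1 \<le> sqrt (gen_eigs K M ! i) / sqrt (gen_eigs K Mbar ! i) \<and>
        sqrt (gen_eigs K M ! i) / sqrt (gen_eigs K Mbar ! i) \<le> sqrt (1 + 9/2 * \<beta>)"
      unfolding ga gb using r1 r2 by (simp add: c_def)
  qed
  have dM: "dim_row M = n" "dim_row Mbar = n" using Mc Mbc by auto
  have eM: "eigs M = map fst p3" unfolding eigs_def dM using p3(3) .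
  have eMb: "eigs Mbar = map fst p4" unfolding eigs_def dM using p4(3) .
  have ne3: "p3 \<noteq> []" and ne4: "p4 \<noteq> []" using len n_pos by auto
  have cM: "cond_num M = fst (p3 ! (n-1)) / fst (p3 ! 0)"
    unfolding cond_num_def eM using ne3 len n_pos by (simp add: last_conv_nth hd_conv_nth)
  have cMb: "cond_num Mbar = fst (p4 ! (n-1)) / fst (p4 ! 0)"
    unfolding cond_num_def eMb using ne4 len n_pos by (simp add: last_conv_nth hd_conv_nth)
  define l0 where "l0 = fst (p3 ! 0)"
  define ln where "ln = fst (p3 ! (n-1))"
  define m0 where "m0 = fst (p4 ! 0)"
  define mn where "mn = fst (p4 ! (n-1))"
  have l0: "l0 > 0" "ln > 0" "m0 > 0" "mn > 0"
    using pos3[OF n_pos] pos3[OF nl] pos4[OF n_pos] pos4[OF nl] by (auto simp: l0_def ln_def m0_def mn_def)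
  have h1: "l0 \<le> m0" using cmp3 by (simp add: l0_def m0_def)
  have h2: "mn \<le> c * ln" using cmp4 by (simp add: mn_def ln_def)
  have "cond_num Mbar / cond_num M = (mn * l0) / (m0 * ln)"
    unfolding cM cMb using l0 by (simp add: l0_def ln_def m0_def mn_def field_simps)
  also have "\<dots> \<le> (c * ln * m0) / (m0 * ln)"
  proof (rule divide_right_mono)
    show "mn * l0 \<le> c * ln * m0"
      using mult_mono[OF h2 h1] l0 c1 by (simp add: mult_ac)
    show "0 \<le> m0 * ln" using l0 by simp
  qed
  also have "\<dots> = c" using l0 by simp
  finally have part2: "cond_num Mbar / cond_num M \<le> 1 + 9/2 * \<beta>" by (simp add: c_def)
  show ?thesis using part1 part2 by blast
qed

end
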